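(* Let $\tau\in\mathbb{D}$ and let $F=\{\sigma_1,\dots,\sigma_n\}\subset\partial\mathbb{D}$ consist of pairwise distinct points. (A) For every $\varphi\in\mathfrak{U}_\tau[F]$ there exists a single-valued holomorphic branch $\Psi[\varphi]:\mathbb{D}\to\mathbb{C}$ of $\log\big((\varphi(z)-\tau)/(z-\tau)\big)$ whose angular limit at $\sigma_k$ equals $0$ for each $k=1,\dots,n$. (B) Let $I\subset\mathbb{R}$ be an interval and $(\varphi_t)_{t\in I}\subset\mathfrak{U}_\tau[F]$ a family such that $t\mapsto\varphi_t(z)$ is continuous for every $z\in\mathbb{D}$. Suppose that, for some $k_0\in\{1,\dots,n\}$, the function $t\mapsto\varphi_t'(\sigma_{k_0})$ is locally bounded on $I$. Then $I\ni t\mapsto\Psi[\varphi_t]\in\mathsf{Hol}(\mathbb{D})$ is continuous with respect to the topology of locally uniform convergence.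
   Context: $\mathbb{D}$ is the open unit disk. $\mathfrak{U}_\tau$ consists of $\mathrm{id}_{\mathbb{D}}$ together with all univalent holomorphic self-maps $\varphi\ne\mathrm{id}_{\mathbb{D}}$ of $\mathbb{D}$ whose Denjoy–Wolff point is $\tau$; for $\tau\in\mathbb{D}$ this means $\varphi(\tau)=\tau$. $\mathfrak{U}_\tau[F]$ is the set of $\varphi\in\mathfrak{U}_\tau$ such that each $\sigma\in F$ is a boundary regular fixed point of $\varphi$: the angular limit of $\varphi$ at $\sigma$ equals $\sigma$, and the angular derivative $\varphi'(\sigma)$ exists finitely. *)

theory Defs
  imports "HOL-Analysis.Analysis"
begin

text \<open>The unit disk is \<open>ball 0 1\<close>; its boundary is \<open>sphere 0 1\<close>.\<close>

definition stolz :: "complex \<Rightarrow> real \<Rightarrow> complex set" where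
  "stolz \<sigma> C = {z. cmod z < 1 \<and> cmod (\<sigma> - z) < C * (1 - cmod z)}"

definition has_angular_limit :: "(complex \<Rightarrow> complex) \<Rightarrow> complex \<Rightarrow> complex \<Rightarrow> bool" where
  "has_angular_limit f \<sigma> L \<longleftrightarrow> (\<forall>C>1. (f \<longlongrightarrow> L) (at \<sigma> within stolz \<sigma> C))"

definition has_angular_deriv :: "(complex \<Rightarrow> complex) \<Rightarrow> complex \<Rightarrow> complex \<Rightarrow> bool" where
  "has_angular_deriv f \<sigma> D \<longleftrightarrow>
     (\<exists>L. has_angular_limit f \<sigma> L \<and> has_angular_limit (\<lambda>z. (f z - L) / (z - \<sigma>)) \<sigma> D)"

definition angular_deriv :: "(complex \<Rightarrow> complex) \<Rightarrow> complex \<Rightarrow> complex" where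
  "angular_deriv f \<sigma> = (THE D. has_angular_deriv f \<sigma> D)"

definition boundary_regular_fixpoint :: "(complex \<Rightarrow> complex) \<Rightarrow> complex \<Rightarrow> bool" where
  "boundary_regular_fixpoint \<phi> \<sigma> \<longleftrightarrow>
     has_angular_limit \<phi> \<sigma> \<sigma> \<and> (\<exists>D. has_angular_deriv \<phi> \<sigma> D)"

definition univalent_selfmap :: "(complex \<Rightarrow> complex) \<Rightarrow> bool" where
  "univalent_selfmap \<phi> \<longleftrightarrow> \<phi> holomorphic_on ball 0 1 \<and> inj_on \<phi> (ball 0 1)
     \<and> \<phi> ` ball 0 1 \<subseteq> ball 0 1"

text \<open>Maps are identified with their restrictions to the disk.\<close>
definition U_int :: "complex \<Rightarrow> (complex \<Rightarrow> complex) set" where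
  "U_int \<tau> = {\<phi>. univalent_selfmap \<phi> \<and> ((\<forall>z\<in>ball 0 1. \<phi> z = z) \<or> \<phi> \<tau> = \<tau>)}"

definition U_int_F :: "complex \<Rightarrow> complex set \<Rightarrow> (complex \<Rightarrow> complex) set" where
  "U_int_F \<tau> F = {\<phi> \<in> U_int \<tau>. \<forall>\<sigma>\<in>F. boundary_regular_fixpoint \<phi> \<sigma>}"

definition is_log_branch :: "complex \<Rightarrow> (complex \<Rightarrow> complex) \<Rightarrow> (complex \<Rightarrow> complex) \<Rightarrow> bool" where
  "is_log_branch \<tau> \<phi> \<Psi> \<longleftrightarrow> \<Psi> holomorphic_on ball 0 1 \<and>
     (\<forall>z\<in>ball 0 1 - {\<tau>}. exp (\<Psi> z) = (\<phi> z - \<tau>) / (z - \<tau>))"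

end

theory Submission
  imports Defs "HOL-Complex_Analysis.Complex_Analysis"
begin


lemma exp_eq_1_int:
  assumes "exp z = 1" obtains n::int where "z = 2 * pi * \<i> * of_int n"
proof -
  from assms obtain n::int where "Re z = 0" "Im z = of_int (2 * n) * pi" unfolding exp_eq_1 by blast
  then have "z = 2 * pi * \<i> * of_int n" by (intro complex_eqI) auto
  then show ?thesis using that by blast
qed

lemma exp_one_const:
  fixes f :: "'a::topological_space \<Rightarrow> complex"
  assumes S: "connected S" and f: "continuous_on S f" and e: "\<And>x. x \<in> S \<Longrightarrow> exp (f x) = 1"
  shows "\<exists>n::int. \<forall>x\<in>S. f x = 2 * pi * \<i> * of_int n"
proof (cases "S = {}")
  case True then show ?thesis by auto
next
  case False
  then obtain x0 where x0: "x0 \<in> S" by auto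
  have "f constant_on S"
  proof (rule continuous_discrete_range_constant[OF S f])
    fix x assume x: "x \<in> S"
    show "\<exists>e>0. \<forall>y. y \<in> S \<and> f y \<noteq> f x \<longrightarrow> e \<le> norm (f y - f x)"
    proof (intro exI[of _ "2*pi"] conjI allI impI)
      fix y assume y: "y \<in> S \<and> f y \<noteq> f x"
      have "exp (f y - f x) = 1" using e[of x] e[of y] x y by (simp add: exp_diff)
      then obtain n::int where n: "f y - f x = 2 * pi * \<i> * of_int n"
        by (rule exp_eq_1_int)
      then have "n \<noteq> 0" using y by auto
      then have "1 \<le> \<bar>real_of_int n\<bar>" by linarith
      have "norm (f y - f x) = 2 * pi * \<bar>real_of_int n\<bar>" unfolding n by (simp add: norm_mult abs_mult)
      also have "\<dots> \<ge> 2 * pi" using \<open>1 \<le> _\<close> by (simp add: pi_gt_zero)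
      finally show "2 * pi \<le> norm (f y - f x)" .
    qed (simp add: pi_gt_zero)
  qed
  then have c: "\<forall>x\<in>S. f x = f x0" using x0 by (auto simp: constant_on_def)
  have "exp (f x0) = 1" using e x0 by auto
  then obtain n::int where n: "f x0 = 2 * pi * \<i> * of_int n"
    by (rule exp_eq_1_int)
  show ?thesis using c n by (intro exI[of _ n]) (auto simp: algebra_simps)
qed


lemma stolz_convex:
  assumes C: "C > 0" shows "convex (stolz \<sigma> C)"
  unfolding convex_def
proof (intro ballI allI impI)
  fix x y :: complex and u v :: real
  assume x: "x \<in> stolz \<sigma> C" and y: "y \<in> stolz \<sigma> C" and u0: "0 \<le> u" and v0: "0 \<le> v" and uv1: "u + v = 1"
  have uv: "0 \<le> u \<and> 0 \<le> v \<and> u + v = 1" using u0 v0 uv1 by auto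
  have x1: "cmod x < 1" "cmod (\<sigma> - x) < C * (1 - cmod x)" using x by (auto simp: stolz_def)
  have y1: "cmod y < 1" "cmod (\<sigma> - y) < C * (1 - cmod y)" using y by (auto simp: stolz_def)
  define z where "z = u *\<^sub>R x + v *\<^sub>R y"
  have nz: "cmod z \<le> u * cmod x + v * cmod y"
  proof -
    have "cmod z \<le> norm (u *\<^sub>R x) + norm (v *\<^sub>R y)" unfolding z_def by (rule norm_triangle_ineq)
    also have "\<dots> = u * cmod x + v * cmod y" using uv by simp
    finally show ?thesis .
  qed
  have lt: "u * a + v * b < u * A + v * B" if "a < A" "b < B" for a b A B :: real
  proof (cases "u = 0")
    case True then show ?thesis using uv that by auto
  next
    case False then have "u > 0" using uv by auto
    then have "u * a < u * A" using that by simp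
    moreover have "v * b \<le> v * B" using uv that by (simp add: mult_left_mono)
    ultimately show ?thesis by linarith
  qed
  have "u * cmod x + v * cmod y < u * 1 + v * 1" by (rule lt) (use x1 y1 in auto)
  with nz uv have z1: "cmod z < 1" by auto
  have "u *\<^sub>R (\<sigma> - x) + v *\<^sub>R (\<sigma> - y) = (u + v) *\<^sub>R \<sigma> - z"
    unfolding z_def by (simp add: scaleR_diff_right scaleR_add_left)
  then have e: "\<sigma> - z = u *\<^sub>R (\<sigma> - x) + v *\<^sub>R (\<sigma> - y)" using uv by simp
  have "cmod (\<sigma> - z) \<le> norm (u *\<^sub>R (\<sigma> - x)) + norm (v *\<^sub>R (\<sigma> - y))"
    unfolding e by (rule norm_triangle_ineq)
  also have "\<dots> = u * cmod (\<sigma> - x) + v * cmod (\<sigma> - y)" using uv by simp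
  finally have "cmod (\<sigma> - z) \<le> u * cmod (\<sigma> - x) + v * cmod (\<sigma> - y)" .
  also have "\<dots> < u * (C * (1 - cmod x)) + v * (C * (1 - cmod y))" by (rule lt) (use x1 y1 in auto)
  also have "\<dots> = C * (1 - (u * cmod x + v * cmod y))"
  proof -
    have "v = 1 - u" using uv by simp
    show ?thesis unfolding \<open>v = 1 - u\<close> by (simp add: algebra_simps)
  qed
  also have "\<dots> \<le> C * (1 - cmod z)" using nz C by (simp add: mult_left_mono)
  finally show "u *\<^sub>R x + v *\<^sub>R y \<in> stolz \<sigma> C" using z1 unfolding stolz_def z_def by auto
qed

lemma stolz_mono: "C \<le> C' \<Longrightarrow> stolz \<sigma> C \<subseteq> stolz \<sigma> C'"
proof
  fix z assume "C \<le> C'" "z \<in> stolz \<sigma> C"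
  then have "cmod z < 1" "cmod (\<sigma> - z) < C * (1 - cmod z)" unfolding stolz_def by auto
  moreover have "C * (1 - cmod z) \<le> C' * (1 - cmod z)" using \<open>C \<le> C'\<close> \<open>cmod z < 1\<close> by (simp add: mult_right_mono)
  ultimately have "cmod (\<sigma> - z) < C' * (1 - cmod z)" using less_le_trans by blast
  then show "z \<in> stolz \<sigma> C'" using \<open>cmod z < 1\<close> unfolding stolz_def by auto
qed

lemma stolz_ball: "stolz \<sigma> C \<subseteq> ball 0 1"
  unfolding stolz_def by auto

lemma stolz_not_mem: "cmod \<sigma> = 1 \<Longrightarrow> \<sigma> \<notin> stolz \<sigma> C"
  unfolding stolz_def by auto

lemma radial_in_stolz:
  assumes "cmod \<sigma> = 1" "0 \<le> r" "r < 1" "C > 1"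
  shows "of_real r * \<sigma> \<in> stolz \<sigma> C"
proof -
  have "cmod (\<sigma> - of_real r * \<sigma>) = cmod (of_real (1 - r) * \<sigma>)" by (simp add: algebra_simps)
  also have "\<dots> = \<bar>1 - r\<bar> * cmod \<sigma>" by (simp only: norm_mult norm_of_real)
  finally have "cmod (\<sigma> - of_real r * \<sigma>) = \<bar>1 - r\<bar> * cmod \<sigma>" .
  then have "cmod (\<sigma> - of_real r * \<sigma>) = 1 - r" using assms by simp
  moreover have "cmod (of_real r * \<sigma>) = r" using assms by (simp add: norm_mult)
  ultimately show ?thesis using assms unfolding stolz_def by auto
qed

lemma radial_filterlim:
  assumes "cmod \<sigma> = 1" "C > 1"
  shows "filterlim (\<lambda>r. of_real r * \<sigma>) (at \<sigma> within stolz \<sigma> C) (at_left 1)"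
proof (rule filterlim_at_withinI)
  have "((\<lambda>r. of_real r * \<sigma>) \<longlongrightarrow> of_real 1 * \<sigma>) (at_left (1::real))"
    by (intro tendsto_intros)
  then show "((\<lambda>r. of_real r * \<sigma>) \<longlongrightarrow> \<sigma>) (at_left (1::real))" by simp
  show "\<forall>\<^sub>F x in at_left 1. of_real x * \<sigma> \<in> stolz \<sigma> C - {\<sigma>}"
  proof -
    have "\<forall>\<^sub>F x in at_left 1. x \<in> {0<..<1::real}" by (rule eventually_at_left_real) simp
    then show ?thesis
    proof (rule eventually_mono)
    fix x :: real assume "x \<in> {0<..<1::real}"
    then have "0 < x" "x < 1" by auto
    then show "of_real x * \<sigma> \<in> stolz \<sigma> C - {\<sigma>}"
      using radial_in_stolz[of \<sigma> x C] assms stolz_not_mem[of \<sigma> C] by auto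
  qed
  qed
qed

lemma stolz_nontrivial:
  assumes "cmod \<sigma> = 1" "C > 1"
  shows "at \<sigma> within stolz \<sigma> C \<noteq> bot"
proof
  assume "at \<sigma> within stolz \<sigma> C = bot"
  then have "filterlim (\<lambda>r. of_real r * \<sigma>) bot (at_left (1::real))"
    using radial_filterlim[OF assms] by simp
  then show False by (simp add: filterlim_def bot_unique filtermap_bot_iff)
qed

lemma angular_radial:
  assumes "has_angular_limit f \<sigma> L" "cmod \<sigma> = 1"
  shows "((\<lambda>r. f (of_real r * \<sigma>)) \<longlongrightarrow> L) (at_left 1)"
proof -
  have "(f \<longlongrightarrow> L) (at \<sigma> within stolz \<sigma> 2)" using assms unfolding has_angular_limit_def by auto
  from filterlim_compose[OF this radial_filterlim[OF assms(2), of 2]] show ?thesis by (simp add: o_def)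
qed

lemma angular_limit_unique:
  assumes "has_angular_limit f \<sigma> L1" "has_angular_limit f \<sigma> L2" "cmod \<sigma> = 1"
  shows "L1 = L2"
  using tendsto_unique[OF _ angular_radial[OF assms(1,3)] angular_radial[OF assms(2,3)]] by simp

lemma angular_deriv_eq:
  assumes "boundary_regular_fixpoint f \<sigma>" "cmod \<sigma> = 1"
  shows "has_angular_limit (\<lambda>z. (f z - \<sigma>) / (z - \<sigma>)) \<sigma> (angular_deriv f \<sigma>)"
proof -
  from assms obtain D where D: "has_angular_deriv f \<sigma> D" and l: "has_angular_limit f \<sigma> \<sigma>"
    unfolding boundary_regular_fixpoint_def by auto
  have uq: "D' = D" if "has_angular_deriv f \<sigma> D'" for D'
  proof -
    from that obtain L' where L': "has_angular_limit f \<sigma> L'" "has_angular_limit (\<lambda>z. (f z - L') / (z - \<sigma>)) \<sigma> D'"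
      unfolding has_angular_deriv_def by auto
    from D obtain L where L: "has_angular_limit f \<sigma> L" "has_angular_limit (\<lambda>z. (f z - L) / (z - \<sigma>)) \<sigma> D"
      unfolding has_angular_deriv_def by auto
    have "L = L'" using angular_limit_unique[OF L(1) L'(1) assms(2)] .
    then show ?thesis using angular_limit_unique[OF L(2) _ assms(2)] L'(2) by simp
  qed
  have "angular_deriv f \<sigma> = D" unfolding angular_deriv_def using D uq by (rule the_equality)
  moreover from D obtain L where L: "has_angular_limit f \<sigma> L" "has_angular_limit (\<lambda>z. (f z - L) / (z - \<sigma>)) \<sigma> D"
      unfolding has_angular_deriv_def by auto
  moreover have "L = \<sigma>" using angular_limit_unique[OF L(1) l assms(2)] .
  ultimately show ?thesis by simp
qed


lemma moebius_identity:
  "cmod (1 - cnj w * z)^2 - cmod (z - w)^2 = (1 - cmod w^2) * (1 - cmod z^2)"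
  by (simp only: cmod_power2) (simp add: power2_eq_square algebra_simps)

lemma schwarz_pick:
  assumes holf: "f holomorphic_on ball 0 1" and fD: "\<And>z. cmod z < 1 \<Longrightarrow> cmod (f z) < 1"
    and a: "cmod a < 1" and b: "cmod b < 1"
  shows "cmod (Moebius_function 0 (f b) (f a)) \<le> cmod (Moebius_function 0 b a)"
proof -
  define h where "h = (\<lambda>z. Moebius_function 0 (f b) (f (Moebius_function 0 (-b) z)))"
  have fb: "cmod (f b) < 1" using fD b by auto
  have m1: "Moebius_function 0 (-b) holomorphic_on ball 0 1" using b by (intro Moebius_function_holomorphic) simp
  have m1r: "Moebius_function 0 (-b) ` ball 0 1 \<subseteq> ball 0 1"
    using b by (auto intro!: Moebius_function_norm_lt_1)
  have fr: "f ` ball 0 1 \<subseteq> ball 0 1" using fD by auto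
  have "(f \<circ> Moebius_function 0 (-b)) holomorphic_on ball 0 1"
    by (rule holomorphic_on_compose_gen[OF m1 holf m1r])
  moreover have "(f \<circ> Moebius_function 0 (-b)) ` ball 0 1 \<subseteq> ball 0 1" using m1r fr by auto
  ultimately have "(Moebius_function 0 (f b) \<circ> (f \<circ> Moebius_function 0 (-b))) holomorphic_on ball 0 1"
    by (intro holomorphic_on_compose_gen[OF _ Moebius_function_holomorphic[OF fb]]) auto
  then have hol: "h holomorphic_on ball 0 1" unfolding h_def by (simp add: o_def)
  have h0: "h 0 = 0" unfolding h_def Moebius_function_of_zero by (simp add: Moebius_function_eq_zero)
  have hD: "cmod (h z) < 1" if "cmod z < 1" for z
  proof -
    have "cmod (Moebius_function 0 (-b) z) < 1" using b that by (intro Moebius_function_norm_lt_1) auto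
    then have "cmod (f (Moebius_function 0 (-b) z)) < 1" using fD by auto
    then show ?thesis unfolding h_def using fb by (intro Moebius_function_norm_lt_1) auto
  qed
  have xi: "cmod (Moebius_function 0 b a) < 1" using a b by (intro Moebius_function_norm_lt_1)
  have "cmod (h (Moebius_function 0 b a)) \<le> cmod (Moebius_function 0 b a)"
    using Schwarz_Lemma(1)[of h, OF hol h0 hD xi] by blast
  moreover have "Moebius_function 0 (-b) (Moebius_function 0 b a) = a"
    using b a by (intro Moebius_function_compose) auto
  ultimately show ?thesis unfolding h_def by simp
qed

lemma schwarz_pick2:
  assumes holf: "f holomorphic_on ball 0 1" and fD: "\<And>z. cmod z < 1 \<Longrightarrow> cmod (f z) < 1"
    and a: "cmod a < 1" and b: "cmod b < 1"
  shows "(1 - cmod b^2) * (1 - cmod a^2) * cmod (1 - cnj (f b) * f a)^2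
       \<le> (1 - cmod (f b)^2) * (1 - cmod (f a)^2) * cmod (1 - cnj b * a)^2"
proof -
  have nz: "1 - cnj w * z \<noteq> 0" if "cmod w < 1" "cmod z < 1" for w z :: complex
  proof
    assume "1 - cnj w * z = 0"
    then have "cmod (cnj w * z) = 1" by (metis eq_iff_diff_eq_0 norm_one)
    moreover have "cmod w * cmod z < 1 * 1" by (rule mult_strict_mono') (use that in auto)
    then have "cmod (cnj w * z) < 1" by (simp add: norm_mult)
    ultimately show False by simp
  qed
  have fa: "cmod (f a) < 1" and fb: "cmod (f b) < 1" using fD a b by auto
  define A where "A = cmod (1 - cnj (f b) * f a)"
  define B where "B = cmod (1 - cnj b * a)"
  define X where "X = cmod (f a - f b)"
  define Y where "Y = cmod (a - b)"
  have A0: "A > 0" unfolding A_def using nz[OF fb fa] by simp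
  have B0: "B > 0" unfolding B_def using nz[OF b a] by simp
  have "X / A \<le> Y / B"
    using schwarz_pick[OF holf fD a b]
    by (simp add: Moebius_function_simple norm_divide A_def B_def X_def Y_def)
  then have "X * B \<le> Y * A" using A0 B0 by (simp add: field_simps)
  moreover have "0 \<le> X * B" unfolding X_def using B0 by simp
  ultimately have sq: "(X * B)^2 \<le> (Y * A)^2" by (simp add: power_mono)
  have iA: "A^2 - X^2 = (1 - cmod (f b)^2) * (1 - cmod (f a)^2)"
    unfolding A_def X_def by (rule moebius_identity)
  have iB: "B^2 - Y^2 = (1 - cmod b^2) * (1 - cmod a^2)"
    unfolding B_def Y_def by (rule moebius_identity)
  have "(1 - cmod b^2) * (1 - cmod a^2) * A^2 = (B^2 - Y^2) * A^2" using iB by simp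
  also have "\<dots> = B^2 * A^2 - (Y * A)^2" by (simp add: algebra_simps power_mult_distrib)
  also have "\<dots> \<le> B^2 * A^2 - (X * B)^2" using sq by simp
  also have "\<dots> = (A^2 - X^2) * B^2" by (simp add: algebra_simps power_mult_distrib)
  also have "\<dots> = (1 - cmod (f b)^2) * (1 - cmod (f a)^2) * B^2" using iA by simp
  finally show ?thesis unfolding A_def B_def .
qed


lemma cmod_1_minus_real [simp]: "s \<le> 1 \<Longrightarrow> cmod (1 - complex_of_real s) = 1 - s"
proof -
  assume "s \<le> 1"
  have "cmod (1 - complex_of_real s) = cmod (complex_of_real (1 - s))" by simp
  also have "\<dots> = \<bar>1 - s\<bar>" by (rule norm_of_real)
  finally show ?thesis using \<open>s \<le> 1\<close> by simp
qed

lemma julia_radial: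
  assumes holf: "f holomorphic_on ball 0 1" and fD: "\<And>z. cmod z < 1 \<Longrightarrow> cmod (f z) < 1"
    and \<sigma>: "cmod \<sigma> = 1" and lim: "has_angular_limit f \<sigma> \<sigma>"
    and der: "has_angular_limit (\<lambda>z. (f z - \<sigma>) / (z - \<sigma>)) \<sigma> D"
    and r: "0 \<le> r" "r < 1"
  shows "cmod (\<sigma> - f (of_real r * \<sigma>)) \<le> 2 * (cmod D + 1) * (1 - r)"
proof -
  define a where "a = of_real r * \<sigma>"
  have na: "cmod a = r" unfolding a_def using \<sigma> r by (simp add: norm_mult)
  then have a1: "cmod a < 1" using r by simp
  have fa: "cmod (f a) < 1" using fD a1 by auto
  have sc: "cnj \<sigma> * \<sigma> = 1" using \<sigma> by (metis complex_norm_square mult.commute of_real_1 power_one)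
  define b where "b = (\<lambda>s::real. of_real s * \<sigma>)"
  define K where "K = cmod D + 1"
  have q: "((\<lambda>s. (f (b s) - \<sigma>) / (b s - \<sigma>)) \<longlongrightarrow> D) (at_left 1)"
    using angular_radial[OF der \<sigma>] unfolding b_def by simp
  have fbl: "((\<lambda>s. f (b s)) \<longlongrightarrow> \<sigma>) (at_left 1)"
    using angular_radial[OF lim \<sigma>] unfolding b_def by simp
  have evq: "\<forall>\<^sub>F s in at_left 1. cmod ((f (b s) - \<sigma>) / (b s - \<sigma>)) < K"
  proof -
    have "\<forall>\<^sub>F s in at_left 1. dist ((f (b s) - \<sigma>) / (b s - \<sigma>)) D < 1"
      using q by (rule tendstoD) simp
    then show ?thesis
    proof (rule eventually_mono)
      fix s assume "dist ((f (b s) - \<sigma>) / (b s - \<sigma>)) D < 1"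
      then show "cmod ((f (b s) - \<sigma>) / (b s - \<sigma>)) < K" unfolding K_def dist_norm
        using norm_triangle_ineq2[of "(f (b s) - \<sigma>) / (b s - \<sigma>)" D] by linarith
    qed
  qed
  have ev01: "\<forall>\<^sub>F s in at_left 1. s \<in> {0<..<1::real}" by (rule eventually_at_left_real) simp
  define X where "X = (\<lambda>s. cmod (1 - cnj (f (b s)) * f a)^2)"
  have main: "\<forall>\<^sub>F s in at_left 1. (1 + s) * (1 - r^2) * X s \<le> 2 * K * (1 - cmod (f a)^2) * (1 - s * r)^2"
    using evq ev01
  proof eventually_elim
    case (elim s)
    then have s0: "0 < s" and s1: "s < 1" by auto
    have nb: "cmod (b s) = s" unfolding b_def using \<sigma> s0 by (simp add: norm_mult)
    then have b1: "cmod (b s) < 1" using s1 by simp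
    have fb: "cmod (f (b s)) < 1" using fD b1 by auto
    have "cnj (b s) * a = of_real (s * r) * (cnj \<sigma> * \<sigma>)" unfolding a_def b_def by simp
    then have "cnj (b s) * a = of_real (s * r)" using sc by simp
    then have "1 - cnj (b s) * a = of_real (1 - s * r)" by simp
    then have "cmod (1 - cnj (b s) * a) = \<bar>1 - s * r\<bar>" by (metis norm_of_real)
    moreover have "s * r \<le> s * 1" using r s0 by (intro mult_left_mono) auto
    ultimately have nba: "cmod (1 - cnj (b s) * a) = 1 - s * r" using s1 by simp
    have sp: "(1 - s^2) * (1 - r^2) * X s \<le> (1 - cmod (f (b s))^2) * (1 - cmod (f a)^2) * (1 - s * r)^2"
      using schwarz_pick2[OF holf fD a1 b1] unfolding X_def nba na nb by simp
    have bs: "b s - \<sigma> = - (of_real (1 - s) * \<sigma>)" unfolding b_def by (simp add: algebra_simps)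
    have nbs: "cmod (b s - \<sigma>) = 1 - s" unfolding bs using \<sigma> s1 by (simp add: norm_mult)
    have "cmod (f (b s) - \<sigma>) = cmod ((f (b s) - \<sigma>) / (b s - \<sigma>)) * cmod (b s - \<sigma>)"
      using nbs s1 by (simp add: norm_divide)
    also have "\<dots> \<le> K * (1 - s)" unfolding nbs using elim(1) s1 by (intro mult_right_mono) auto
    finally have fbs: "cmod (f (b s) - \<sigma>) \<le> K * (1 - s)" .
    have "1 - cmod (f (b s))^2 = (1 - cmod (f (b s))) * (1 + cmod (f (b s)))" by (simp add: algebra_simps power2_eq_square)
    also have "\<dots> \<le> (1 - cmod (f (b s))) * 2" using fb by (intro mult_left_mono) auto
    also have "1 - cmod (f (b s)) \<le> cmod (f (b s) - \<sigma>)"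
      using norm_triangle_ineq2[of \<sigma> "f (b s)"] \<sigma> by (simp add: norm_minus_commute)
    then have "(1 - cmod (f (b s))) * 2 \<le> K * (1 - s) * 2" using fbs by simp
    finally have fb2: "1 - cmod (f (b s))^2 \<le> 2 * K * (1 - s)" by simp
    have "cmod (f a)^2 \<le> 1" using fa by (intro power_le_one) auto
    then have P0: "0 \<le> (1 - cmod (f a)^2) * (1 - s * r)^2" by (intro mult_nonneg_nonneg) auto
    have "(1 - s^2) * (1 - r^2) * X s \<le> (2 * K * (1 - s)) * ((1 - cmod (f a)^2) * (1 - s * r)^2)"
      using sp mult_right_mono[OF fb2 P0] by (simp add: mult.assoc)
    then have "(1 - s) * ((1 + s) * (1 - r^2) * X s) \<le> (1 - s) * (2 * K * (1 - cmod (f a)^2) * (1 - s * r)^2)"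
      by (simp add: algebra_simps power2_eq_square)
    then show ?case using s1 by simp
  qed
  have l1: "((\<lambda>s. (1 + s) * (1 - r^2) * X s) \<longlongrightarrow> (1 + 1) * (1 - r^2) * cmod (1 - cnj \<sigma> * f a)^2) (at_left 1)"
    unfolding X_def by (intro tendsto_intros fbl)
  have l2: "((\<lambda>s. 2 * K * (1 - cmod (f a)^2) * (1 - s * r)^2) \<longlongrightarrow> 2 * K * (1 - cmod (f a)^2) * (1 - 1 * r)^2) (at_left 1)"
    by (intro tendsto_intros)
  have T: "(1 + 1) * (1 - r^2) * cmod (1 - cnj \<sigma> * f a)^2 \<le> 2 * K * (1 - cmod (f a)^2) * (1 - 1 * r)^2"
    by (rule tendsto_le[OF _ l2 l1 main]) simp
  have "\<sigma> - f a = \<sigma> * (1 - cnj \<sigma> * f a)" using sc by (simp add: algebra_simps)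
  then have E: "cmod (1 - cnj \<sigma> * f a) = cmod (\<sigma> - f a)" using \<sigma> by (simp add: norm_mult)
  define P where "P = (1 - r^2) * cmod (\<sigma> - f a)^2"
  define Q where "Q = K * (1 - cmod (f a)^2) * (1 - r)^2"
  have "(1 + 1) * (1 - r^2) * cmod (1 - cnj \<sigma> * f a)^2 = 2 * P" unfolding P_def E by (simp add: algebra_simps)
  moreover have "2 * K * (1 - cmod (f a)^2) * (1 - 1 * r)^2 = 2 * Q" unfolding Q_def by (simp add: algebra_simps)
  ultimately have "P \<le> Q" using T by simp
  then have ineq: "(1 - r^2) * cmod (\<sigma> - f a)^2 \<le> K * (1 - cmod (f a)^2) * (1 - r)^2" unfolding P_def Q_def .
  define d where "d = cmod (\<sigma> - f a)"
  have d0: "d > 0" unfolding d_def using fa \<sigma> by auto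
  have "1 - cmod (f a) \<le> d" unfolding d_def using norm_triangle_ineq2[of \<sigma> "f a"] \<sigma> by simp
  then have fa2: "1 - cmod (f a)^2 \<le> 2 * d"
  proof -
    have "1 - cmod (f a)^2 = (1 - cmod (f a)) * (1 + cmod (f a))" by (simp add: algebra_simps power2_eq_square)
    also have "\<dots> \<le> (1 - cmod (f a)) * 2" using fa by (intro mult_left_mono) auto
    also have "\<dots> = 2 - 2 * cmod (f a)" by simp
    finally show ?thesis using \<open>1 - cmod (f a) \<le> d\<close> by linarith
  qed
  have K0: "K > 0" unfolding K_def by (smt (verit) norm_ge_zero)
  have "(1 - r) * d^2 \<le> (1 - r^2) * d^2" using r by (intro mult_right_mono) (auto simp: power2_eq_square mult_left_le_one_le)
  also have "\<dots> \<le> K * (1 - cmod (f a)^2) * (1 - r)^2" using ineq unfolding d_def .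
  also have "\<dots> \<le> K * (2 * d) * (1 - r)^2" using fa2 K0 by (intro mult_right_mono mult_left_mono) auto
  finally have "(1 - r) * d * d \<le> (1 - r) * d * (2 * K * (1 - r))" by (simp add: power2_eq_square algebra_simps)
  then have "d \<le> 2 * K * (1 - r)" using r d0 by (simp add: mult_le_cancel_left_pos)
  then show ?thesis unfolding d_def K_def a_def by simp
qed


lemma ev_within_self: "eventually (\<lambda>x. x \<in> S) (at a within S)"
  unfolding eventually_at_topological by (intro exI[of _ UNIV]) auto

lemma holo_lipschitz:
  assumes holh: "h holomorphic_on ball 0 1" and hB: "\<And>z. cmod z < 1 \<Longrightarrow> cmod (h z) \<le> B"
    and \<rho>: "0 \<le> \<rho>" "\<rho> < 1" and x: "cmod x \<le> \<rho>" and y: "cmod y \<le> \<rho>"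
  shows "cmod (h x - h y) \<le> (2 * B / (1 - \<rho>)) * cmod (x - y)"
proof (rule field_differentiable_bound[of "cball 0 \<rho>" h "deriv h"])
  show "convex (cball (0::complex) \<rho>)" by simp
  show "x \<in> cball 0 \<rho>" "y \<in> cball 0 \<rho>" using x y by auto
  fix z assume z: "z \<in> cball (0::complex) \<rho>"
  then have z1: "z \<in> ball 0 1" using \<rho> by auto
  show "(h has_field_derivative deriv h z) (at z within cball 0 \<rho>)"
    by (rule holomorphic_derivI[OF holh _ z1]) simp
  define r where "r = (1 - \<rho>) / 2"
  have r0: "r > 0" unfolding r_def using \<rho> by simp
  have sub: "cball z r \<subseteq> ball 0 1"
  proof
    fix w assume "w \<in> cball z r"
    then have "cmod w \<le> cmod z + r" using norm_triangle_ineq2[of w z] by (simp add: dist_norm norm_minus_commute)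
    also have "\<dots> < 1"
    proof -
      have "cmod z \<le> \<rho>" using z by simp
      then show ?thesis unfolding r_def using \<rho> by (simp add: field_simps)
    qed
    finally show "w \<in> ball 0 1" by simp
  qed
  have "cmod ((deriv ^^ 1) h z) \<le> fact 1 * B / r ^ 1"
  proof (rule Cauchy_inequality)
    show "h holomorphic_on ball z r" using holh sub ball_subset_cball by (metis holomorphic_on_subset order_trans)
    show "continuous_on (cball z r) h"
      using holh sub by (meson continuous_on_subset holomorphic_on_imp_continuous_on)
    show "0 < r" by (rule r0)
    fix w assume "cmod (z - w) = r"
    then have "w \<in> ball 0 1" using sub by (auto simp: dist_norm)
    then show "cmod (h w) \<le> B" using hB by simp
  qed
  then show "cmod (deriv h z) \<le> 2 * B / (1 - \<rho>)" unfolding r_def by (simp add: mult.commute)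
qed

lemma unif_conv_disc:
  fixes f :: "'a \<Rightarrow> complex \<Rightarrow> complex" and F :: "'a filter"
  assumes ev: "\<forall>\<^sub>F s in F. f s holomorphic_on ball 0 1 \<and> (\<forall>z. cmod z < 1 \<longrightarrow> cmod (f s z) \<le> 1)"
    and holg: "g holomorphic_on ball 0 1" and gB: "\<And>z. cmod z < 1 \<Longrightarrow> cmod (g z) \<le> 1"
    and pw: "\<And>z. cmod z < 1 \<Longrightarrow> ((\<lambda>s. f s z) \<longlongrightarrow> g z) F"
    and K: "compact K" "K \<subseteq> ball 0 1"
  shows "uniform_limit K f g F"
proof (cases "K = {}")
  case True then show ?thesis by (simp add: uniform_limit_iff)
next
  case False
  obtain x0 where x0: "x0 \<in> K" "\<And>x. x \<in> K \<Longrightarrow> cmod x \<le> cmod x0"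
    using compact_attains_sup[OF compact_continuous_image[OF continuous_on_norm_id K(1)]] False by force
  define \<rho> where "\<rho> = cmod x0"
  have \<rho>: "0 \<le> \<rho>" "\<rho> < 1" using x0 K unfolding \<rho>_def by auto
  define Lip where "Lip = 2 * 1 / (1 - \<rho>)"
  have Lip0: "Lip > 0" unfolding Lip_def using \<rho> by simp
  show ?thesis unfolding uniform_limit_iff
  proof (intro allI impI)
    fix e :: real assume e: "e > 0"
    define \<delta> where "\<delta> = e / (3 * Lip)"
    have \<delta>0: "\<delta> > 0" unfolding \<delta>_def using e Lip0 by simp
    obtain k where k: "finite k" "k \<subseteq> K" "K \<subseteq> (\<Union>x\<in>k. ball x \<delta>)"
      using seq_compact_imp_totally_bounded[OF compact_imp_seq_compact[OF K(1)]] \<delta>0 by meson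
    have evk: "\<forall>\<^sub>F s in F. \<forall>c\<in>k. dist (f s c) (g c) < e / 3"
    proof (rule eventually_ball_finite[OF k(1)], intro ballI)
      fix c assume "c \<in> k"
      then have "cmod c < 1" using k K by auto
      then show "\<forall>\<^sub>F s in F. dist (f s c) (g c) < e / 3" using pw e by (intro tendstoD) auto
    qed
    show "\<forall>\<^sub>F s in F. \<forall>x\<in>K. dist (f s x) (g x) < e"
      using evk ev
    proof eventually_elim
      case (elim s)
      show ?case
      proof
        fix z assume z: "z \<in> K"
        then obtain c where c: "c \<in> k" "z \<in> ball c \<delta>" using k by auto
        have zr: "cmod z \<le> \<rho>" and cr: "cmod c \<le> \<rho>" using x0 z c k unfolding \<rho>_def by auto
        have d: "cmod (z - c) < \<delta>" using c by (simp add: dist_norm norm_minus_commute)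
        have "cmod (f s z - f s c) \<le> Lip * cmod (z - c)"
          unfolding Lip_def using elim(2) \<rho> zr cr by (intro holo_lipschitz) auto
        also have "\<dots> \<le> Lip * \<delta>" using d Lip0 by simp
        finally have 1: "cmod (f s z - f s c) \<le> Lip * \<delta>" .
        have "cmod (g c - g z) \<le> Lip * cmod (c - z)"
          unfolding Lip_def using holg gB \<rho> zr cr by (intro holo_lipschitz) auto
        also have "\<dots> \<le> Lip * \<delta>" using d Lip0 by (simp add: norm_minus_commute)
        finally have 2: "cmod (g c - g z) \<le> Lip * \<delta>" .
        have 3: "cmod (f s c - g c) < e / 3" using elim(1) c by (auto simp: dist_norm)
        have "Lip * \<delta> = e / 3" unfolding \<delta>_def using Lip0 by simp
        moreover have "cmod (f s z - g z) \<le> cmod (f s z - f s c) + cmod (f s c - g c) + cmod (g c - g z)"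
        proof -
          have "f s z - g z = (f s z - f s c) + (f s c - g c) + (g c - g z)" by simp
          then have "cmod (f s z - g z) \<le> cmod ((f s z - f s c) + (f s c - g c)) + cmod (g c - g z)"
            by (metis norm_triangle_ineq)
          moreover have "cmod ((f s z - f s c) + (f s c - g c)) \<le> cmod (f s z - f s c) + cmod (f s c - g c)"
            by (rule norm_triangle_ineq)
          ultimately show ?thesis by linarith
        qed
        ultimately show "dist (f s z) (g z) < e" using 1 2 3 by (simp add: dist_norm)
      qed
    qed
  qed
qed


lemma Ln_small:
  assumes "cmod (w - 1) \<le> 1/2"
  shows "cmod (Ln w) \<le> 2 * cmod (w - 1)"
proof -
  define u where "u = w - 1"
  have u: "cmod u \<le> 1/2" using assms unfolding u_def .
  have "cmod (Ln (1 + u) - u) \<le> cmod u ^ 2 / (1 - cmod u)" using u by (intro Ln_approx_linear) simp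
  also have "\<dots> \<le> cmod u"
  proof -
    have "cmod u ^ 2 \<le> cmod u * (1 - cmod u)" using u by (simp add: power2_eq_square mult_left_mono)
    then show ?thesis using u by (simp add: divide_le_eq)
  qed
  finally have "cmod (Ln (1 + u) - u) \<le> cmod u" .
  then have "cmod (Ln (1 + u)) \<le> cmod u + cmod u"
    using norm_triangle_ineq2[of "Ln (1 + u)" u] by linarith
  then show ?thesis by (simp add: u_def)
qed

lemma exp_small_zero:
  assumes "exp z = 1" "cmod z < 2 * pi" shows "z = 0"
proof -
  obtain n :: int where n: "z = 2 * pi * \<i> * of_int n" using assms(1) by (rule exp_eq_1_int)
  have "cmod z = 2 * pi * \<bar>real_of_int n\<bar>" unfolding n by (simp add: norm_mult)
  then have "\<bar>real_of_int n\<bar> < 1" using assms(2) by simp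
  then have "n = 0" by linarith
  then show ?thesis using n by simp
qed

lemma Re_pos_of_close: "cmod (w - 1) < 1 \<Longrightarrow> Re w > 0"
  using abs_Re_le_cmod[of "w - 1"] by auto

lemma not_nonpos_of_close: "cmod (w - 1) < 1 \<Longrightarrow> w \<notin> \<real>\<^sub>\<le>\<^sub>0"
  using Re_pos_of_close[of w] by (auto simp: complex_nonpos_Reals_iff)

lemma seg_close:
  fixes \<phi> :: "complex \<Rightarrow> complex"
  assumes \<tau>: "cmod \<tau> < 1" and hol: "\<phi> holomorphic_on ball 0 1" and \<phi>D: "\<And>z. cmod z < 1 \<Longrightarrow> cmod (\<phi> z) < 1"
    and \<sigma>: "cmod \<sigma> = 1" and brf: "boundary_regular_fixpoint \<phi> \<sigma>"
    and M: "cmod (angular_deriv \<phi> \<sigma>) \<le> M"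
    and r: "1 - (1 - cmod \<tau>) / (4 * M + 8) \<le> r" "r < 1"
  shows "cmod ((\<phi> (of_real r * \<sigma>) - \<tau>) / (of_real r * \<sigma> - \<tau>) - 1) < 1"
    and "of_real r * \<sigma> \<noteq> \<tau>" and "0 \<le> r"
proof -
  have M0: "M \<ge> 0" using M by (meson norm_ge_zero order_trans)
  have lim: "has_angular_limit \<phi> \<sigma> \<sigma>" using brf unfolding boundary_regular_fixpoint_def by auto
  define z where "z = of_real r * \<sigma>"
  define \<delta> where "\<delta> = (1 - cmod \<tau>) / (4 * M + 8)"
  have \<delta>0: "\<delta> > 0" unfolding \<delta>_def using \<tau> M0 by simp
  have "\<delta> \<le> (1 - cmod \<tau>) / 8" unfolding \<delta>_def using \<tau> M0 by (intro divide_left_mono) auto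
  moreover have "(1 - cmod \<tau>) / 8 < 1"
  proof -
    have "1 - cmod \<tau> < 8" using norm_ge_zero[of \<tau>] by linarith
    then show ?thesis by simp
  qed
  ultimately have "\<delta> < 1" by linarith
  then show r0: "0 \<le> r" using r unfolding \<delta>_def[symmetric] by linarith
  have 1: "cmod (\<sigma> - \<phi> z) \<le> 2 * (cmod (angular_deriv \<phi> \<sigma>) + 1) * (1 - r)"
    unfolding z_def by (rule julia_radial[OF hol \<phi>D \<sigma> lim angular_deriv_eq[OF brf \<sigma>] r0 r(2)])
  also have "\<dots> \<le> 2 * (M + 1) * (1 - r)" using M r by (intro mult_right_mono) auto
  finally have a: "cmod (\<sigma> - \<phi> z) \<le> 2 * (M + 1) * (1 - r)" .
  have b: "cmod (\<sigma> - z) = 1 - r"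
  proof -
    have "\<sigma> - z = (1 - of_real r) * \<sigma>" unfolding z_def by (simp add: algebra_simps)
    then show ?thesis using \<sigma> r by (simp add: norm_mult)
  qed
  have c: "cmod (\<sigma> - \<tau>) \<ge> 1 - cmod \<tau>" using norm_triangle_ineq2[of \<sigma> \<tau>] \<sigma> by simp
  have d: "1 - r \<le> \<delta>" using r unfolding \<delta>_def by simp
  have e: "2 * ((2 * M + 4) * \<delta>) = 1 - cmod \<tau>" unfolding \<delta>_def using M0 by (simp add: field_simps)
  have "(2 * M + 4) * (1 - r) \<le> (2 * M + 4) * \<delta>" using d M0 by (intro mult_left_mono) auto
  then have f: "2 * ((2 * M + 4) * (1 - r)) \<le> 1 - cmod \<tau>" using e by linarith
  have g1: "(1 - r) \<le> (2 * M + 4) * (1 - r)" using M0 r by (simp add: mult_le_cancel_right1)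
  have g2: "(2 * M + 3) * (1 - r) = (2 * M + 4) * (1 - r) - (1 - r)" by (simp add: algebra_simps)
  have zt: "cmod (z - \<tau>) \<ge> (1 - cmod \<tau>) - (1 - r)"
    using norm_triangle_ineq2[of "\<sigma> - \<tau>" "\<sigma> - z"] b c by (simp add: norm_minus_commute)
  have zt0: "cmod (z - \<tau>) > 0" using zt f g1 \<tau> by linarith
  then show "of_real r * \<sigma> \<noteq> \<tau>" unfolding z_def by auto
  have num: "cmod (\<phi> z - z) \<le> (2 * M + 3) * (1 - r)"
  proof -
    have "cmod (\<phi> z - z) \<le> cmod (\<sigma> - \<phi> z) + cmod (\<sigma> - z)"
      using norm_triangle_ineq4[of "\<sigma> - z" "\<sigma> - \<phi> z"] by (simp add: norm_minus_commute)
    then show ?thesis using a b g2 by (simp add: algebra_simps)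
  qed
  have "(\<phi> z - \<tau>) / (z - \<tau>) - 1 = (\<phi> z - z) / (z - \<tau>)" using zt0 by (auto simp: field_simps)
  then have "cmod ((\<phi> z - \<tau>) / (z - \<tau>) - 1) = cmod (\<phi> z - z) / cmod (z - \<tau>)" by (simp add: norm_divide)
  also have "\<dots> < 1"
  proof -
    have "cmod (\<phi> z - z) < cmod (z - \<tau>)"
      using num zt f g1 g2 \<tau> by linarith
    then show ?thesis using zt0 by simp
  qed
  finally show "cmod ((\<phi> (of_real r * \<sigma>) - \<tau>) / (of_real r * \<sigma> - \<tau>) - 1) < 1" unfolding z_def .
qed


lemma seg_value:
  fixes \<phi> \<Psi> :: "complex \<Rightarrow> complex"
  assumes \<tau>: "cmod \<tau> < 1" and hol: "\<phi> holomorphic_on ball 0 1" and \<phi>D: "\<And>z. cmod z < 1 \<Longrightarrow> cmod (\<phi> z) < 1"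
    and \<sigma>: "cmod \<sigma> = 1" and brf: "boundary_regular_fixpoint \<phi> \<sigma>"
    and M: "cmod (angular_deriv \<phi> \<sigma>) \<le> M"
    and r: "1 - (1 - cmod \<tau>) / (4 * M + 8) \<le> r" "r < 1"
    and lb: "is_log_branch \<tau> \<phi> \<Psi>" and al: "has_angular_limit \<Psi> \<sigma> 0"
  shows "\<Psi> (of_real r * \<sigma>) = Ln ((\<phi> (of_real r * \<sigma>) - \<tau>) / (of_real r * \<sigma> - \<tau>))"
proof -
  define S where "S = {r..<1}"
  define G where "G = (\<lambda>x::real. (\<phi> (of_real x * \<sigma>) - \<tau>) / (of_real x * \<sigma> - \<tau>))"
  define k where "k = (\<lambda>x. \<Psi> (of_real x * \<sigma>) - Ln (G x))"
  have lim: "has_angular_limit \<phi> \<sigma> \<sigma>" using brf unfolding boundary_regular_fixpoint_def by auto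
  have holP: "\<Psi> holomorphic_on ball 0 1" using lb unfolding is_log_branch_def by auto
  have props: "cmod (G x - 1) < 1" "of_real x * \<sigma> \<noteq> \<tau>" "0 \<le> x" if "x \<in> S" for x
    using seg_close[OF \<tau> hol \<phi>D \<sigma> brf M, of x] that r unfolding S_def G_def by auto
  have inb: "of_real x * \<sigma> \<in> ball 0 1" if "x \<in> S" for x
    using props(3)[OF that] that \<sigma> unfolding S_def by (auto simp: norm_mult)
  have cl: "continuous_on S (\<lambda>x. of_real x * \<sigma>)" by (intro continuous_intros)
  have cP: "continuous_on S (\<lambda>x. \<Psi> (of_real x * \<sigma>))"
    by (rule continuous_on_compose2[OF holomorphic_on_imp_continuous_on[OF holP] cl]) (use inb in auto)
  have cphi: "continuous_on S (\<lambda>x. \<phi> (of_real x * \<sigma>))"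
    by (rule continuous_on_compose2[OF holomorphic_on_imp_continuous_on[OF hol] cl]) (use inb in auto)
  have cG: "continuous_on S G" unfolding G_def
    by (intro continuous_intros cphi) (use props(2) in auto)
  have ck: "continuous_on S k" unfolding k_def
    by (intro continuous_intros cP cG) (use props(1) not_nonpos_of_close in auto)
  have ek: "exp (k x) = 1" if "x \<in> S" for x
  proof -
    have "exp (\<Psi> (of_real x * \<sigma>)) = G x"
      using lb inb[OF that] props(2)[OF that] unfolding is_log_branch_def G_def by auto
    moreover have "G x \<noteq> 0" using Re_pos_of_close[OF props(1)[OF that]] by auto
    ultimately show ?thesis unfolding k_def by (simp add: exp_diff)
  qed
  obtain n :: int where kn: "\<And>x. x \<in> S \<Longrightarrow> k x = 2 * pi * \<i> * of_int n"
    using exp_one_const[OF convex_connected[of S] ck ek] unfolding S_def by auto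
  have evS: "\<forall>\<^sub>F x in at_left 1. x \<in> S"
    using eventually_at_left_real[OF r(2)] by eventually_elim (auto simp: S_def)
  have l1: "((\<lambda>x. \<Psi> (of_real x * \<sigma>)) \<longlongrightarrow> 0) (at_left 1)" by (rule angular_radial[OF al \<sigma>])
  have l2: "((\<lambda>x. \<phi> (of_real x * \<sigma>)) \<longlongrightarrow> \<sigma>) (at_left 1)" by (rule angular_radial[OF lim \<sigma>])
  have st: "\<sigma> - \<tau> \<noteq> 0" using \<sigma> \<tau> by auto
  have "(G \<longlongrightarrow> (\<sigma> - \<tau>) / (of_real 1 * \<sigma> - \<tau>)) (at_left 1)" unfolding G_def
    by (intro tendsto_intros l2) (use st in simp)
  then have l3: "(G \<longlongrightarrow> 1) (at_left 1)" using st by simp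
  have "(k \<longlongrightarrow> 0 - Ln 1) (at_left 1)" unfolding k_def
    by (intro tendsto_intros l1 l3) simp
  then have l4: "(k \<longlongrightarrow> 0) (at_left 1)" by simp
  have "(k \<longlongrightarrow> 2 * pi * \<i> * of_int n) (at_left 1)"
    by (rule tendsto_eventually) (use evS kn in \<open>auto elim: eventually_mono\<close>)
  then have "2 * pi * \<i> * of_int n = (0::complex)" using l4 tendsto_unique by (metis trivial_limit_at_left_real)
  then have "k r = 0" using kn[of r] r unfolding S_def by auto
  then show ?thesis unfolding k_def G_def by simp
qed


lemma maxmod_cball:
  fixes f :: "complex \<Rightarrow> complex"
  assumes "f holomorphic_on ball 0 \<rho>" "continuous_on (cball 0 \<rho>) f"
    and "\<And>z. z \<in> sphere 0 \<rho> \<Longrightarrow> cmod (f z) \<le> B" and "z \<in> cball 0 \<rho>"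
  shows "cmod (f z) \<le> B"
  using maximum_modulus_frontier[of f "cball 0 \<rho>" B z] assms by (simp add: closure_closed)

lemma partB:
  fixes \<tau> :: complex and F :: "complex set" and I :: "real set"
    and \<phi> \<Psi> :: "real \<Rightarrow> complex \<Rightarrow> complex"
  assumes \<tau>: "\<tau> \<in> ball 0 1" and Fs: "F \<subseteq> sphere 0 1"
    and h\<phi>: "\<forall>t\<in>I. \<phi> t \<in> U_int_F \<tau> F" and cont: "\<forall>z\<in>ball 0 1. continuous_on I (\<lambda>t. \<phi> t z)"
    and \<sigma>0: "\<sigma>0 \<in> F"
    and bnd: "\<forall>t\<in>I. \<exists>e>0. \<exists>M. \<forall>s\<in>I. \<bar>s - t\<bar> < e \<longrightarrow> cmod (angular_deriv (\<phi> s) \<sigma>0) \<le> M"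
    and h\<Psi>: "\<forall>t\<in>I. is_log_branch \<tau> (\<phi> t) (\<Psi> t) \<and> (\<forall>\<sigma>\<in>F. has_angular_limit (\<Psi> t) \<sigma> 0)"
    and t0: "t0 \<in> I" and K: "compact K" "K \<subseteq> ball 0 1"
  shows "uniform_limit K \<Psi> (\<Psi> t0) (at t0 within I)"
proof -
  define Fil where "Fil = at t0 within I"
  have \<tau>1: "cmod \<tau> < 1" using \<tau> by simp
  have \<sigma>: "cmod \<sigma>0 = 1" using \<sigma>0 Fs by auto
  have holphi: "\<phi> t holomorphic_on ball 0 1" and injphi: "inj_on (\<phi> t) (ball 0 1)"
    and phiD: "\<And>z. cmod z < 1 \<Longrightarrow> cmod (\<phi> t z) < 1" and fixphi: "\<phi> t \<tau> = \<tau>"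
    and brf: "boundary_regular_fixpoint (\<phi> t) \<sigma>0"
    and lb: "is_log_branch \<tau> (\<phi> t) (\<Psi> t)" and al: "has_angular_limit (\<Psi> t) \<sigma>0 0"
    if "t \<in> I" for t
  proof -
    have U: "\<phi> t \<in> U_int_F \<tau> F" using h\<phi> that by auto
    then show "\<phi> t holomorphic_on ball 0 1" "inj_on (\<phi> t) (ball 0 1)"
      unfolding U_int_F_def U_int_def univalent_selfmap_def by auto
    show "cmod (\<phi> t z) < 1" if "cmod z < 1" for z
      using U that unfolding U_int_F_def U_int_def univalent_selfmap_def by (force simp: image_subset_iff)
    show "\<phi> t \<tau> = \<tau>" using U \<tau> unfolding U_int_F_def U_int_def by auto
    show "boundary_regular_fixpoint (\<phi> t) \<sigma>0" using U \<sigma>0 unfolding U_int_F_def by auto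
    show "is_log_branch \<tau> (\<phi> t) (\<Psi> t)" "has_angular_limit (\<Psi> t) \<sigma>0 0" using h\<Psi> that \<sigma>0 by auto
  qed
  have holPsi: "\<Psi> t holomorphic_on ball 0 1" if "t \<in> I" for t
    using lb[OF that] unfolding is_log_branch_def by auto
  obtain e M where e: "e > 0" and eM: "\<And>s. s \<in> I \<Longrightarrow> \<bar>s - t0\<bar> < e \<Longrightarrow> cmod (angular_deriv (\<phi> s) \<sigma>0) \<le> M"
    using bnd t0 by meson
  have M0: "M \<ge> 0"
  proof -
    have "cmod (angular_deriv (\<phi> t0) \<sigma>0) \<le> M" using eM[OF t0] e by simp
    then show ?thesis using norm_ge_zero order_trans by blast
  qed
  define r0 where "r0 = 1 - (1 - cmod \<tau>) / (4 * M + 8)"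
  have r01: "r0 < 1" unfolding r0_def using M0 \<tau>1 by simp
  define zs where "zs = of_real r0 * \<sigma>0"
  define g where "g = (\<lambda>s z. (\<phi> s z - \<tau>) / (z - \<tau>))"
  define good where "good = (\<lambda>s. s \<in> I \<and> \<bar>s - t0\<bar> < e)"
  have goodt0: "good t0" unfolding good_def using t0 e by simp
  have evgood: "\<forall>\<^sub>F s in Fil. good s"
  proof -
    have "\<forall>\<^sub>F s in Fil. dist s t0 < e" unfolding Fil_def by (rule tendstoD[OF tendsto_ident_at e])
    moreover have "\<forall>\<^sub>F s in Fil. s \<in> I" unfolding Fil_def by (rule ev_within_self)
    ultimately show ?thesis unfolding good_def by eventually_elim (auto simp: dist_real_def)
  qed
  have zsprops: "cmod (g s zs - 1) < 1" "zs \<noteq> \<tau>" "0 \<le> r0" if "good s" for s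
  proof -
    have sI: "s \<in> I" and se: "\<bar>s - t0\<bar> < e" using that unfolding good_def by auto
    have Ms: "cmod (angular_deriv (\<phi> s) \<sigma>0) \<le> M" by (rule eM[OF sI se])
    have r0le: "1 - (1 - cmod \<tau>) / (4 * M + 8) \<le> r0" unfolding r0_def by simp
    show "cmod (g s zs - 1) < 1" "zs \<noteq> \<tau>" "0 \<le> r0"
      using seg_close[OF \<tau>1 holphi[OF sI] phiD[OF sI] \<sigma> brf[OF sI] Ms r0le r01]
      unfolding zs_def g_def by auto
  qed
  have zsval: "\<Psi> s zs = Ln (g s zs)" if "good s" for s
  proof -
    have sI: "s \<in> I" and se: "\<bar>s - t0\<bar> < e" using that unfolding good_def by auto
    have Ms: "cmod (angular_deriv (\<phi> s) \<sigma>0) \<le> M" by (rule eM[OF sI se])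
    have r0le: "1 - (1 - cmod \<tau>) / (4 * M + 8) \<le> r0" unfolding r0_def by simp
    show ?thesis
      using seg_value[OF \<tau>1 holphi[OF sI] phiD[OF sI] \<sigma> brf[OF sI] Ms r0le r01 lb[OF sI] al[OF sI]]
      unfolding zs_def g_def by auto
  qed
  have r00: "0 \<le> r0" using zsprops(3)[OF goodt0] .
  have zsb: "cmod zs = r0" unfolding zs_def using \<sigma> r00 by (simp add: norm_mult)
  have zs1: "zs \<in> ball 0 1" using zsb r01 by simp
  have phil: "((\<lambda>s. \<phi> s z) \<longlongrightarrow> \<phi> t0 z) Fil" if "z \<in> ball 0 1" for z
    using cont that t0 unfolding Fil_def continuous_on_def by auto
  have Psizs: "((\<lambda>s. \<Psi> s zs) \<longlongrightarrow> \<Psi> t0 zs) Fil"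
  proof -
    have "((\<lambda>s. Ln (g s zs)) \<longlongrightarrow> Ln (g t0 zs)) Fil"
      unfolding g_def
      by (intro tendsto_intros phil zs1) (use zsprops(1,2)[OF goodt0] not_nonpos_of_close in \<open>auto simp: g_def\<close>)
    then have "((\<lambda>s. Ln (g s zs)) \<longlongrightarrow> \<Psi> t0 zs) Fil" using zsval[OF goodt0] by simp
    then show ?thesis
      by (rule Lim_transform_eventually) (use evgood zsval in \<open>auto elim: eventually_mono\<close>)
  qed
  show ?thesis
  proof (cases "K = {}")
    case True then show ?thesis by (simp add: uniform_limit_iff)
  next
    case False
    obtain x0 where x0: "x0 \<in> K" "\<And>x. x \<in> K \<Longrightarrow> cmod x \<le> cmod x0"
      using compact_attains_sup[OF compact_continuous_image[OF continuous_on_norm_id K(1)]] False by force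
    define \<rho> where "\<rho> = max (max (cmod x0) r0) ((1 + cmod \<tau>) / 2)"
    have x01: "cmod x0 < 1" using x0 K by auto
    have \<rho>1: "\<rho> < 1" unfolding \<rho>_def using x01 r01 \<tau>1 by auto
    have \<rho>\<tau>: "cmod \<tau> < \<rho>"
    proof -
      have h: "cmod \<tau> < (1 + cmod \<tau>) / 2" using \<tau>1 by (simp add: field_simps)
      show ?thesis unfolding \<rho>_def using h by (simp add: less_max_iff_disj)
    qed
    have \<rho>0: "\<rho> > 0" using \<rho>\<tau> norm_ge_zero[of \<tau>] by linarith
    have Kc: "K \<subseteq> cball 0 \<rho>" using x0 unfolding \<rho>_def by force
    have zsc: "zs \<in> cball 0 \<rho>" using zsb unfolding \<rho>_def by simp
    have cb1: "cball 0 \<rho> \<subseteq> ball (0::complex) 1" using \<rho>1 by auto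
    have sph1: "sphere 0 \<rho> \<subseteq> ball (0::complex) 1" using \<rho>1 by auto
    have U: "uniform_limit (sphere 0 \<rho>) \<phi> (\<phi> t0) Fil"
    proof (rule unif_conv_disc)
      show "\<forall>\<^sub>F s in Fil. \<phi> s holomorphic_on ball 0 1 \<and> (\<forall>z. cmod z < 1 \<longrightarrow> cmod (\<phi> s z) \<le> 1)"
        using evgood by eventually_elim (auto simp: good_def holphi less_imp_le phiD)
      show "\<phi> t0 holomorphic_on ball 0 1" using holphi t0 .
      show "cmod (\<phi> t0 z) \<le> 1" if "cmod z < 1" for z using phiD[OF t0 that] by simp
      show "((\<lambda>s. \<phi> s z) \<longlongrightarrow> \<phi> t0 z) Fil" if "cmod z < 1" for z using phil that by simp
      show "compact (sphere (0::complex) \<rho>)" by simp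
      show "sphere 0 \<rho> \<subseteq> ball (0::complex) 1" by (rule sph1)
    qed
    define c1 where "c1 = \<rho> - cmod \<tau>"
    have c10: "c1 > 0" unfolding c1_def using \<rho>\<tau> by simp
    have zt: "cmod (z - \<tau>) \<ge> c1" if "z \<in> sphere 0 \<rho>" for z
      using that norm_triangle_ineq2[of z \<tau>] unfolding c1_def by simp
    have ztn: "z \<noteq> \<tau>" if "z \<in> sphere 0 \<rho>" for z using zt[OF that] c10 by auto
    have gt0nz: "g t0 z \<noteq> 0" if "z \<in> sphere 0 \<rho>" for z
    proof -
      have "\<phi> t0 z \<noteq> \<phi> t0 \<tau>" using injphi[OF t0] ztn[OF that] that sph1 \<tau> by (meson inj_on_def subsetD)
      then show ?thesis using fixphi[OF t0] ztn[OF that] unfolding g_def by auto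
    qed
    have cg: "continuous_on (sphere 0 \<rho>) (\<lambda>z. cmod (g t0 z))"
    proof -
      have "continuous_on (sphere 0 \<rho>) (\<phi> t0)"
        using holomorphic_on_imp_continuous_on[OF holphi[OF t0]] sph1 continuous_on_subset by blast
      then show ?thesis unfolding g_def by (intro continuous_intros) (use ztn in auto)
    qed
    have sne: "sphere (0::complex) \<rho> \<noteq> {}" using \<rho>0 by (simp add: sphere_eq_empty)
    obtain z1 where z1: "z1 \<in> sphere 0 \<rho>" "\<And>z. z \<in> sphere 0 \<rho> \<Longrightarrow> cmod (g t0 z1) \<le> cmod (g t0 z)"
      using compact_attains_inf[OF compact_continuous_image[OF cg] ] sne by fastforce
    define c2 where "c2 = cmod (g t0 z1)"
    have c20: "c2 > 0" unfolding c2_def using gt0nz[OF z1(1)] by simp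
    define E where "E = (\<lambda>s z. exp (\<Psi> s z - \<Psi> t0 z))"
    have UE: "\<forall>\<^sub>F s in Fil. \<forall>z\<in>cball 0 \<rho>. cmod (E s z - 1) \<le> \<epsilon>" if \<epsilon>: "\<epsilon> > 0" for \<epsilon>
    proof -
      have "\<forall>\<^sub>F s in Fil. \<forall>z\<in>sphere 0 \<rho>. dist (\<phi> s z) (\<phi> t0 z) < \<epsilon> * c1 * c2"
        using U \<epsilon> c10 c20 unfolding uniform_limit_iff by auto
      with evgood show ?thesis
      proof eventually_elim
        case (elim s)
        have sI: "s \<in> I" using elim(1) unfolding good_def by auto
        have onS: "cmod (E s z - 1) \<le> \<epsilon>" if z: "z \<in> sphere 0 \<rho>" for z
        proof -
          have zb: "z \<in> ball 0 1 - {\<tau>}" using z sph1 ztn by auto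
          have "exp (\<Psi> s z) = g s z" "exp (\<Psi> t0 z) = g t0 z"
            using lb[OF sI] lb[OF t0] zb unfolding is_log_branch_def g_def by auto
          then have Ez: "E s z = g s z / g t0 z" unfolding E_def by (simp add: exp_diff)
          have "g s z - g t0 z = (\<phi> s z - \<phi> t0 z) / (z - \<tau>)" unfolding g_def by (simp add: diff_divide_distrib)
          then have "E s z - 1 = (\<phi> s z - \<phi> t0 z) / ((z - \<tau>) * g t0 z)"
            using Ez gt0nz[OF z] ztn[OF z] by (simp add: field_simps)
          then have "cmod (E s z - 1) = cmod (\<phi> s z - \<phi> t0 z) / (cmod (z - \<tau>) * cmod (g t0 z))"
            by (simp add: norm_divide norm_mult)
          also have "\<dots> \<le> cmod (\<phi> s z - \<phi> t0 z) / (c1 * c2)"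
          proof -
            have le: "c1 * c2 \<le> cmod (z - \<tau>) * cmod (g t0 z)"
              using zt[OF z] z1(2)[OF z] c10 c20 unfolding c2_def by (intro mult_mono) auto
            have p: "0 < c1 * c2" using c10 c20 by simp
            then have "0 < (cmod (z - \<tau>) * cmod (g t0 z)) * (c1 * c2)" using le by simp
            then show ?thesis by (intro divide_left_mono le) auto
          qed
          also have "\<dots> \<le> \<epsilon>"
          proof -
            have "cmod (\<phi> s z - \<phi> t0 z) < \<epsilon> * c1 * c2" using elim(2) z by (auto simp: dist_norm)
            then show ?thesis using c10 c20 by (simp add: divide_le_eq mult.assoc)
          qed
          finally show ?thesis .
        qed
        have holE: "(\<lambda>z. E s z - 1) holomorphic_on ball 0 1" unfolding E_def
          by (intro holomorphic_intros holPsi sI t0)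
        show ?case
        proof
          fix z :: complex assume z: "z \<in> cball 0 \<rho>"
          show "cmod (E s z - 1) \<le> \<epsilon>"
          proof (rule maxmod_cball[of "\<lambda>z. E s z - 1" \<rho> \<epsilon> z])
            show "(\<lambda>z. E s z - 1) holomorphic_on ball 0 \<rho>"
              using holE cb1 ball_subset_cball by (meson holomorphic_on_subset subset_trans)
            show "continuous_on (cball 0 \<rho>) (\<lambda>z. E s z - 1)"
              using holomorphic_on_imp_continuous_on[OF holE] cb1 continuous_on_subset by blast
          qed (use onS z in auto)
        qed
      qed
    qed
    show ?thesis unfolding uniform_limit_iff Fil_def[symmetric]
    proof (intro allI impI)
      fix \<epsilon> :: real assume \<epsilon>: "\<epsilon> > 0"
      define \<epsilon>' where "\<epsilon>' = min (1/2) (\<epsilon> / 4)"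
      have \<epsilon>'0: "\<epsilon>' > 0" unfolding \<epsilon>'_def using \<epsilon> by simp
      have evz: "\<forall>\<^sub>F s in Fil. dist (\<Psi> s zs) (\<Psi> t0 zs) < 1" using tendstoD[OF Psizs] by simp
      show "\<forall>\<^sub>F s in Fil. \<forall>x\<in>K. dist (\<Psi> s x) (\<Psi> t0 x) < \<epsilon>"
        using evgood evz UE[OF \<epsilon>'0]
      proof eventually_elim
        case (elim s)
        have sI: "s \<in> I" using elim(1) unfolding good_def by auto
        have Ec: "cmod (E s z - 1) \<le> 1/2" if "z \<in> cball 0 \<rho>" for z
          using elim(3) that unfolding \<epsilon>'_def by fastforce
        define d where "d = (\<lambda>z. \<Psi> s z - \<Psi> t0 z - Ln (E s z))"
        have cd: "continuous_on (cball 0 \<rho>) d"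
        proof -
          have c1: "continuous_on (cball 0 \<rho>) (\<Psi> s)" "continuous_on (cball 0 \<rho>) (\<Psi> t0)"
            using holomorphic_on_imp_continuous_on[OF holPsi[OF sI]] holomorphic_on_imp_continuous_on[OF holPsi[OF t0]]
              cb1 continuous_on_subset by blast+
          show ?thesis unfolding d_def E_def
            by (intro continuous_intros c1) (use Ec not_nonpos_of_close in \<open>force simp: E_def\<close>)
        qed
        have ed: "exp (d z) = 1" if "z \<in> cball 0 \<rho>" for z
        proof -
          have "E s z \<noteq> 0" unfolding E_def by simp
          then show ?thesis unfolding d_def by (simp add: exp_diff E_def)
        qed
        obtain n :: int where dn: "\<And>z. z \<in> cball 0 \<rho> \<Longrightarrow> d z = 2 * pi * \<i> * of_int n"
          using exp_one_const[OF convex_connected[OF convex_cball] cd ed] by auto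
        have "cmod (d zs) \<le> cmod (\<Psi> s zs - \<Psi> t0 zs) + cmod (Ln (E s zs))"
          unfolding d_def by (rule norm_triangle_ineq4)
        also have "\<dots> < 1 + 2 * (1/2)"
        proof (rule add_less_le_mono)
          show "cmod (\<Psi> s zs - \<Psi> t0 zs) < 1" using elim(2) by (simp add: dist_norm)
          have "cmod (Ln (E s zs)) \<le> 2 * cmod (E s zs - 1)" using Ec[OF zsc] by (rule Ln_small)
          also have "\<dots> \<le> 2 * (1/2)" using Ec[OF zsc] by simp
          finally show "cmod (Ln (E s zs)) \<le> 2 * (1/2)" .
        qed
        also have "\<dots> < 2 * pi" using pi_gt3 by simp
        finally have "d zs = 0" using ed[OF zsc] exp_small_zero by blast
        then have d0: "d z = 0" if "z \<in> cball 0 \<rho>" for z using dn[OF that] dn[OF zsc] by simp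
        show ?case
        proof
          fix x assume x: "x \<in> K"
          then have xc: "x \<in> cball 0 \<rho>" using Kc by auto
          have "\<Psi> s x - \<Psi> t0 x = Ln (E s x)" using d0[OF xc] unfolding d_def by simp
          then have "cmod (\<Psi> s x - \<Psi> t0 x) \<le> 2 * cmod (E s x - 1)" using Ln_small[OF Ec[OF xc]] by simp
          also have "\<dots> \<le> 2 * \<epsilon>'" using elim(3) xc by fastforce
          also have "\<dots> < \<epsilon>" unfolding \<epsilon>'_def using \<epsilon> by linarith
          finally show "dist (\<Psi> s x) (\<Psi> t0 x) < \<epsilon>" by (simp add: dist_norm)
        qed
      qed
    qed
  qed
qed


lemma log_local:
  fixes f :: "'a::real_normed_vector \<Rightarrow> complex"
  assumes W: "convex W" and aW: "a \<notin> W" and cf: "continuous_on W f"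
    and lim: "((\<lambda>x. exp (f x)) \<longlongrightarrow> 1) (at a within W)"
  shows "\<exists>\<delta>>0. \<exists>n::int. \<forall>x\<in>W. dist x a < \<delta> \<longrightarrow>
            cmod (exp (f x) - 1) < 1 \<and> f x = 2 * pi * \<i> * of_int n + Ln (exp (f x))"
proof -
  have "\<forall>\<^sub>F x in at a within W. dist (exp (f x)) 1 < 1" using tendstoD[OF lim] by simp
  then obtain \<delta> where \<delta>: "\<delta> > 0" and h\<delta>: "\<And>x. x \<in> W \<Longrightarrow> x \<noteq> a \<Longrightarrow> dist x a < \<delta> \<Longrightarrow> dist (exp (f x)) 1 < 1"
    unfolding eventually_at by blast
  define V where "V = W \<inter> ball a \<delta>"
  have V: "convex V" unfolding V_def using W by (simp add: convex_Int)
  have cl: "cmod (exp (f x) - 1) < 1" if "x \<in> V" for x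
    using h\<delta>[of x] that aW unfolding V_def by (auto simp: dist_norm norm_minus_commute)
  have cV: "continuous_on V (\<lambda>x. f x - Ln (exp (f x)))"
  proof -
    have cfV: "continuous_on V f" using cf continuous_on_subset unfolding V_def by blast
    show ?thesis by (intro continuous_intros cfV) (use cl not_nonpos_of_close in auto)
  qed
  have eV: "exp (f x - Ln (exp (f x))) = 1" if "x \<in> V" for x by (simp add: exp_diff)
  obtain n :: int where n: "\<And>x. x \<in> V \<Longrightarrow> f x - Ln (exp (f x)) = 2 * pi * \<i> * of_int n"
    using exp_one_const[OF convex_connected[OF V] cV eV] by auto
  show ?thesis
  proof (intro exI[of _ \<delta>] conjI \<delta> exI[of _ n] ballI impI)
    fix x assume "x \<in> W" "dist x a < \<delta>"
    then have xV: "x \<in> V" unfolding V_def by (simp add: dist_commute)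
    show "cmod (exp (f x) - 1) < 1" by (rule cl[OF xV])
    show "f x = 2 * pi * \<i> * of_int n + Ln (exp (f x))" using n[OF xV] by (simp add: algebra_simps)
  qed
qed

lemma log_limit:
  fixes f :: "'a::real_normed_vector \<Rightarrow> complex"
  assumes W: "convex W" and aW: "a \<notin> W" and cf: "continuous_on W f"
    and lim: "((\<lambda>x. exp (f x)) \<longlongrightarrow> 1) (at a within W)"
  shows "\<exists>n::int. (f \<longlongrightarrow> 2 * pi * \<i> * of_int n) (at a within W)"
proof -
  obtain \<delta> and n :: int where \<delta>: "\<delta> > 0" and h: "\<And>x. x \<in> W \<Longrightarrow> dist x a < \<delta> \<Longrightarrow>
            f x = 2 * pi * \<i> * of_int n + Ln (exp (f x))"
    using log_local[OF assms] by blast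
  have "((\<lambda>x. 2 * pi * \<i> * of_int n + Ln (exp (f x))) \<longlongrightarrow> 2 * pi * \<i> * of_int n + Ln 1) (at a within W)"
    by (intro tendsto_intros lim) auto
  then have l: "((\<lambda>x. 2 * pi * \<i> * of_int n + Ln (exp (f x))) \<longlongrightarrow> 2 * pi * \<i> * of_int n) (at a within W)"
    by simp
  have ev: "\<forall>\<^sub>F x in at a within W. 2 * pi * \<i> * of_int n + Ln (exp (f x)) = f x"
    unfolding eventually_at using \<delta> h by (intro exI[of _ \<delta>]) auto
  show ?thesis using Lim_transform_eventually[OF l ev] by blast
qed

lemma h_not_nonpos:
  assumes \<sigma>: "cmod \<sigma> = 1" and a: "cmod a < 1" and b: "cmod b < 1"
  shows "(\<sigma> - a) / (\<sigma> - b) \<notin> \<real>\<^sub>\<le>\<^sub>0"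
proof
  assume H: "(\<sigma> - a) / (\<sigma> - b) \<in> \<real>\<^sub>\<le>\<^sub>0"
  have sc: "cnj \<sigma> * \<sigma> = 1" using \<sigma> by (metis complex_norm_square mult.commute of_real_1 power_one)
  define u where "u = 1 - cnj \<sigma> * a"
  define v where "v = 1 - cnj \<sigma> * b"
  have Rep: "Re (1 - cnj \<sigma> * c) > 0" if "cmod c < 1" for c
  proof -
    have "Re (cnj \<sigma> * c) \<le> cmod (cnj \<sigma> * c)" by (rule complex_Re_le_cmod)
    also have "\<dots> = cmod c" using \<sigma> by (simp add: norm_mult)
    finally show ?thesis using that by simp
  qed
  have u: "Re u > 0" and v: "Re v > 0" unfolding u_def v_def using Rep a b by auto
  have "\<sigma> - a = \<sigma> * u" "\<sigma> - b = \<sigma> * v" unfolding u_def v_def using sc by (auto simp: algebra_simps)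
  then have "(\<sigma> - a) / (\<sigma> - b) = u / v" using \<sigma> by auto
  with H have H2: "Re (u / v) \<le> 0" "Im (u / v) = 0" by (auto simp: complex_nonpos_Reals_iff)
  define x where "x = Re (u / v)"
  have x: "x \<le> 0" "u / v = of_real x" using H2 unfolding x_def by (auto intro: complex_eqI)
  have v0: "v \<noteq> 0" using v by auto
  then have "u = of_real x * v" using x(2) by (simp add: field_simps)
  then have "Re u = x * Re v" by simp
  also have "\<dots> \<le> 0" using x(1) v by (simp add: mult_nonpos_nonneg)
  finally show False using u by simp
qed

definition dq :: "(complex \<Rightarrow> complex) \<Rightarrow> complex \<Rightarrow> complex \<Rightarrow> complex" where
  "dq f z w = (if z = w then deriv f z else (f z - f w) / (z - w))"

lemma dq_sym: "dq f z w = dq f w z"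
proof (cases "z = w")
  case False
  have "(f z - f w) / (z - w) = (- (f w - f z)) / (- (w - z))" by simp
  also have "\<dots> = (f w - f z) / (w - z)" by (rule minus_divide_divide)
  finally show ?thesis unfolding dq_def using False by auto
qed (simp add: dq_def)

lemma dq_nz:
  assumes hol: "f holomorphic_on ball 0 1" and inj: "inj_on f (ball 0 1)"
    and z: "z \<in> ball 0 1" and w: "w \<in> ball 0 1"
  shows "dq f z w \<noteq> 0"
proof (cases "z = w")
  case True
  then show ?thesis unfolding dq_def using holomorphic_injective_imp_regular[OF hol _ inj z] by simp
next
  case False
  then have "f z \<noteq> f w" using inj z w by (meson inj_on_def)
  then show ?thesis unfolding dq_def using False by simp
qed


lemma dq_cont:
  assumes hol: "f holomorphic_on ball 0 1"
  shows "continuous_on (ball 0 1 \<times> ball 0 1) (\<lambda>p. dq f (fst p) (snd p))"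
proof -
  have op: "open (ball (0::complex) 1 \<times> ball 0 1)" by (simp add: open_Times)
  have contf: "isCont f x" if "x \<in> ball 0 1" for x
    using holomorphic_on_imp_continuous_on[OF hol] that continuous_on_eq_continuous_at[OF open_ball] by blast
  have hd: "deriv f holomorphic_on ball 0 1" by (rule holomorphic_deriv[OF hol open_ball])
  have contd: "isCont (deriv f) x" if "x \<in> ball 0 1" for x
    using holomorphic_on_imp_continuous_on[OF hd] that continuous_on_eq_continuous_at[OF open_ball] by blast
  show ?thesis unfolding continuous_on_eq_continuous_at[OF op]
  proof
    fix p0 :: "complex \<times> complex" assume p0: "p0 \<in> ball 0 1 \<times> ball 0 1"
    obtain a b where ab: "p0 = (a, b)" by fastforce
    have a: "a \<in> ball 0 1" and b: "b \<in> ball 0 1" using p0 ab by auto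
    show "isCont (\<lambda>p. dq f (fst p) (snd p)) p0"
    proof (cases "a = b")
      case False
      define P where "P = (\<lambda>p. (f (fst p) - f (snd p)) / (fst p - snd p))"
      have lfst: "((\<lambda>p. fst p) \<longlongrightarrow> a) (at p0)" using tendsto_fst[OF tendsto_ident_at[of p0 UNIV]] ab by simp
      have lsnd: "((\<lambda>p. snd p) \<longlongrightarrow> b) (at p0)" using tendsto_snd[OF tendsto_ident_at[of p0 UNIV]] ab by simp
      have l1: "((\<lambda>p. f (fst p)) \<longlongrightarrow> f a) (at p0)" by (rule isCont_tendsto_compose[OF contf[OF a] lfst])
      have l2: "((\<lambda>p. f (snd p)) \<longlongrightarrow> f b) (at p0)" by (rule isCont_tendsto_compose[OF contf[OF b] lsnd])
      have lP: "(P \<longlongrightarrow> (f a - f b) / (a - b)) (at p0)" unfolding P_def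
        by (intro tendsto_intros l1 l2 lfst lsnd) (use False in simp)
      have "((\<lambda>p. fst p - snd p) \<longlongrightarrow> a - b) (at p0)" by (intro tendsto_intros lfst lsnd)
      then have "\<forall>\<^sub>F p in at p0. fst p - snd p \<noteq> 0" using False by (intro tendsto_imp_eventually_ne) auto
      then have ev: "\<forall>\<^sub>F p in at p0. P p = dq f (fst p) (snd p)"
        by eventually_elim (auto simp: P_def dq_def)
      have "((\<lambda>p. dq f (fst p) (snd p)) \<longlongrightarrow> (f a - f b) / (a - b)) (at p0)"
        by (rule Lim_transform_eventually[OF lP ev])
      then show ?thesis unfolding isCont_def using ab False by (simp add: dq_def)
    next
      case True
      show ?thesis unfolding continuous_at_eps_delta
      proof (intro allI impI)
        fix e :: real assume e: "e > 0"
        obtain d1 where d1: "d1 > 0" and hd1: "\<And>x. dist x a < d1 \<Longrightarrow> dist (deriv f x) (deriv f a) < e / 2"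
          using contd[OF a] e unfolding continuous_at_eps_delta by (meson half_gt_zero)
        define d where "d = min d1 (1 - cmod a)"
        have d0: "d > 0" unfolding d_def using d1 a by simp
        have sub: "ball a d \<subseteq> ball 0 1"
        proof
          fix x assume "x \<in> ball a d"
          then have "cmod (x - a) < 1 - cmod a" unfolding d_def by (simp add: dist_norm norm_minus_commute)
          then show "x \<in> ball 0 1" using norm_triangle_ineq2[of x a] by simp
        qed
        show "\<exists>d>0. \<forall>x'. dist x' p0 < d \<longrightarrow> dist (dq f (fst x') (snd x')) (dq f (fst p0) (snd p0)) < e"
        proof (intro exI[of _ d] conjI allI impI d0)
          fix p assume pd: "dist p p0 < d"
          obtain z w where zw: "p = (z, w)" by fastforce
          have za: "dist z a < d" using dist_fst_le[of p p0] pd zw ab by simp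
          have wa: "dist w a < d" using dist_snd_le[of p p0] pd zw ab True by simp
          have val0: "dq f (fst p0) (snd p0) = deriv f a" using ab True by (simp add: dq_def)
          show "dist (dq f (fst p) (snd p)) (dq f (fst p0) (snd p0)) < e"
          proof (cases "z = w")
            case True
            have "dist z a < d1" using za unfolding d_def by simp
            then have h1: "dist (deriv f z) (deriv f a) < e / 2" by (rule hd1)
            have h2: "e / 2 < e" using e by simp
            have "dq f (fst p) (snd p) = deriv f z" using True zw by (simp add: dq_def)
            then show ?thesis using val0 h1 h2 by simp
          next
            case False
            define h where "h = (\<lambda>\<xi>. f \<xi> - deriv f a * \<xi>)"
            have hder: "(h has_field_derivative (deriv f \<xi> - deriv f a)) (at \<xi> within ball a d)"
              if "\<xi> \<in> ball a d" for \<xi>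
            proof -
              have xb: "\<xi> \<in> ball 0 1" using that sub by auto
              have fd: "(f has_field_derivative deriv f \<xi>) (at \<xi> within ball a d)"
                using holomorphic_derivI[OF hol open_ball xb] .
              have gd: "((\<lambda>\<xi>. deriv f a * \<xi>) has_field_derivative deriv f a) (at \<xi> within ball a d)"
                by (auto intro!: derivative_eq_intros)
              show ?thesis unfolding h_def using DERIV_diff[OF fd gd] by simp
            qed
            have hb: "cmod (deriv f \<xi> - deriv f a) \<le> e / 2" if "\<xi> \<in> ball a d" for \<xi>
              using hd1[of \<xi>] that unfolding d_def by (auto simp: dist_norm norm_minus_commute)
            have "cmod (h z - h w) \<le> e / 2 * cmod (z - w)"
              by (rule field_differentiable_bound[OF convex_ball hder hb])
                 (use za wa in \<open>auto simp: dist_commute\<close>)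
            moreover have "(f z - f w) / (z - w) - deriv f a = (h z - h w) / (z - w)"
              unfolding h_def using False by (simp add: field_simps)
            ultimately have "cmod ((f z - f w) / (z - w) - deriv f a) \<le> e / 2"
              using False by (simp add: norm_divide divide_le_eq)
            then show ?thesis using False zw val0 e by (simp add: dq_def dist_norm)
          qed
        qed
      qed
    qed
  qed
qed


lemma dq_lim:
  assumes lim: "has_angular_limit \<phi> \<sigma> \<sigma>" and \<sigma>: "cmod \<sigma> = 1" and w: "w \<in> ball 0 1" and C: "C > 1"
  shows "((\<lambda>z. dq \<phi> z w) \<longlongrightarrow> (\<sigma> - \<phi> w) / (\<sigma> - w)) (at \<sigma> within stolz \<sigma> C)"
proof -
  have sw: "\<sigma> - w \<noteq> 0" using w \<sigma> by auto
  have l1: "(\<phi> \<longlongrightarrow> \<sigma>) (at \<sigma> within stolz \<sigma> C)" using lim C unfolding has_angular_limit_def by auto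
  have l: "((\<lambda>z. (\<phi> z - \<phi> w) / (z - w)) \<longlongrightarrow> (\<sigma> - \<phi> w) / (\<sigma> - w)) (at \<sigma> within stolz \<sigma> C)"
    by (intro tendsto_intros l1) (use sw in auto)
  have ev: "\<forall>\<^sub>F z in at \<sigma> within stolz \<sigma> C. (\<phi> z - \<phi> w) / (z - w) = dq \<phi> z w"
    unfolding eventually_at
  proof (intro exI[of _ "cmod (\<sigma> - w)"] conjI ballI impI)
    show "cmod (\<sigma> - w) > 0" using sw by simp
    fix z assume "z \<in> stolz \<sigma> C" "z \<noteq> \<sigma> \<and> dist z \<sigma> < cmod (\<sigma> - w)"
    then have "z \<noteq> w" by (auto simp: dist_norm norm_minus_commute)
    then show "(\<phi> z - \<phi> w) / (z - w) = dq \<phi> z w" by (simp add: dq_def)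
  qed
  show ?thesis by (rule Lim_transform_eventually[OF l ev])
qed

lemma A_sym:
  assumes hol: "\<phi> holomorphic_on ball 0 1" and inj: "inj_on \<phi> (ball 0 1)"
    and cL: "continuous_on (ball 0 1 \<times> ball 0 1) L"
    and eL: "\<And>p. p \<in> ball 0 1 \<times> ball 0 1 \<Longrightarrow> exp (L p) = dq \<phi> (fst p) (snd p)"
    and z: "z \<in> ball 0 1" and w: "w \<in> ball 0 1"
  shows "L (w, z) = L (z, w)"
proof -
  define D2 where "D2 = ball (0::complex) 1 \<times> ball (0::complex) 1"
  define f where "f = (\<lambda>p. L (prod.swap p) - L p)"
  have sw: "prod.swap ` D2 \<subseteq> D2" unfolding D2_def by auto
  have cf: "continuous_on D2 f" unfolding f_def
    by (intro continuous_intros continuous_on_compose2[OF cL[folded D2_def] continuous_on_swap sw] cL[folded D2_def])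
  have ef: "exp (f p) = 1" if "p \<in> D2" for p
  proof -
    have p1: "fst p \<in> ball 0 1" "snd p \<in> ball 0 1" using that unfolding D2_def by auto
    have "exp (L (prod.swap p)) = exp (L p)"
      using eL[of p] eL[of "prod.swap p"] that sw dq_sym[of \<phi> "fst p" "snd p"] unfolding D2_def by auto
    moreover have "exp (L p) \<noteq> 0" by simp
    ultimately show ?thesis unfolding f_def by (simp add: exp_diff)
  qed
  have cD: "connected D2" unfolding D2_def by (intro convex_connected convex_Times) auto
  obtain n :: int where n: "\<And>p. p \<in> D2 \<Longrightarrow> f p = 2 * pi * \<i> * of_int n" using exp_one_const[OF cD cf ef] by auto
  have "f (0, 0) = 0" unfolding f_def by simp
  moreover have "(0::complex, 0::complex) \<in> D2" unfolding D2_def by simp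
  ultimately have "f (z, w) = 0" using n z w unfolding D2_def by (metis mem_Sigma_iff)
  then show ?thesis unfolding f_def by simp
qed

lemma A_lim:
  assumes hol: "\<phi> holomorphic_on ball 0 1"
    and cL: "continuous_on (ball 0 1 \<times> ball 0 1) L"
    and eL: "\<And>p. p \<in> ball 0 1 \<times> ball 0 1 \<Longrightarrow> exp (L p) = dq \<phi> (fst p) (snd p)"
    and \<tau>: "\<tau> \<in> ball 0 1" and fix\<tau>: "\<phi> \<tau> = \<tau>"
    and \<sigma>: "cmod \<sigma> = 1" and lim: "has_angular_limit \<phi> \<sigma> \<sigma>"
  shows "\<exists>c. exp c = 1 \<and> has_angular_limit (\<lambda>z. L (z, \<tau>)) \<sigma> c"
proof -
  have \<sigma>\<tau>: "\<sigma> - \<tau> \<noteq> 0" using \<sigma> \<tau> by auto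
  have ex: "\<exists>n::int. ((\<lambda>z. L (z, \<tau>)) \<longlongrightarrow> 2 * pi * \<i> * of_int n) (at \<sigma> within stolz \<sigma> C)"
    if C: "C > 1" for C
  proof (rule log_limit)
    show "convex (stolz \<sigma> C)" using C by (intro stolz_convex) simp
    show "\<sigma> \<notin> stolz \<sigma> C" using stolz_not_mem[OF \<sigma>] .
    have "(\<lambda>z. (z, \<tau>)) ` stolz \<sigma> C \<subseteq> ball 0 1 \<times> ball 0 1" using stolz_ball \<tau> by auto
    then show "continuous_on (stolz \<sigma> C) (\<lambda>z. L (z, \<tau>))"
      by (intro continuous_on_compose2[OF cL]) (auto intro!: continuous_intros)
    have "((\<lambda>z. dq \<phi> z \<tau>) \<longlongrightarrow> (\<sigma> - \<phi> \<tau>) / (\<sigma> - \<tau>)) (at \<sigma> within stolz \<sigma> C)"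
      by (rule dq_lim[OF lim \<sigma> \<tau> C])
    then have l: "((\<lambda>z. dq \<phi> z \<tau>) \<longlongrightarrow> 1) (at \<sigma> within stolz \<sigma> C)" using fix\<tau> \<sigma>\<tau> by simp
    have ev: "\<forall>\<^sub>F z in at \<sigma> within stolz \<sigma> C. dq \<phi> z \<tau> = exp (L (z, \<tau>))"
      using ev_within_self[of "stolz \<sigma> C" \<sigma>]
    proof (rule eventually_mono)
      fix z assume "z \<in> stolz \<sigma> C"
      then have "z \<in> ball 0 1" using stolz_ball by blast
      then have "(z, \<tau>) \<in> ball 0 1 \<times> ball 0 1" using \<tau> by simp
      then show "dq \<phi> z \<tau> = exp (L (z, \<tau>))" using eL by fastforce
    qed
    show "((\<lambda>z. exp (L (z, \<tau>))) \<longlongrightarrow> 1) (at \<sigma> within stolz \<sigma> C)" by (rule Lim_transform_eventually[OF l ev])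
  qed
  obtain n2 :: int where n2: "((\<lambda>z. L (z, \<tau>)) \<longlongrightarrow> 2 * pi * \<i> * of_int n2) (at \<sigma> within stolz \<sigma> 2)"
    using ex[of 2] by auto
  show ?thesis
  proof (intro exI conjI)
    show "exp (2 * pi * \<i> * of_int n2) = 1" by (simp add: exp_eq_1)
    show "has_angular_limit (\<lambda>z. L (z, \<tau>)) \<sigma> (2 * pi * \<i> * of_int n2)"
      unfolding has_angular_limit_def
    proof (intro allI impI)
      fix C :: real assume C: "C > 1"
      obtain n :: int where n: "((\<lambda>z. L (z, \<tau>)) \<longlongrightarrow> 2 * pi * \<i> * of_int n) (at \<sigma> within stolz \<sigma> C)"
        using ex[OF C] by auto
      define C' where "C' = min C 2"
      have C': "C' > 1" unfolding C'_def using C by simp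
      have a: "((\<lambda>z. L (z, \<tau>)) \<longlongrightarrow> 2 * pi * \<i> * of_int n) (at \<sigma> within stolz \<sigma> C')"
        by (rule tendsto_within_subset[OF n stolz_mono]) (simp add: C'_def)
      have b: "((\<lambda>z. L (z, \<tau>)) \<longlongrightarrow> 2 * pi * \<i> * of_int n2) (at \<sigma> within stolz \<sigma> C')"
        by (rule tendsto_within_subset[OF n2 stolz_mono]) (simp add: C'_def)
      have "2 * pi * \<i> * of_int n = (2 * pi * \<i> * of_int n2 :: complex)"
        using tendsto_unique[OF stolz_nontrivial[OF \<sigma> C'] a b] .
      then show "((\<lambda>z. L (z, \<tau>)) \<longlongrightarrow> 2 * pi * \<i> * of_int n2) (at \<sigma> within stolz \<sigma> C)" using n by simp
    qed
  qed
qed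


lemma A_path:
  assumes hol: "\<phi> holomorphic_on ball 0 1" and inj: "inj_on \<phi> (ball 0 1)"
    and \<phi>D: "\<And>z. cmod z < 1 \<Longrightarrow> cmod (\<phi> z) < 1"
    and cL: "continuous_on (ball 0 1 \<times> ball 0 1) L"
    and eL: "\<And>p. p \<in> ball 0 1 \<times> ball 0 1 \<Longrightarrow> exp (L p) = dq \<phi> (fst p) (snd p)"
    and \<tau>: "\<tau> \<in> ball 0 1" and fix\<tau>: "\<phi> \<tau> = \<tau>"
    and \<sigma>: "cmod \<sigma> = 1" and lim: "has_angular_limit \<phi> \<sigma> \<sigma>"
    and c: "((\<lambda>z. L (z, \<tau>)) \<longlongrightarrow> c) (at \<sigma> within stolz \<sigma> 2)"
    and w0: "w0 \<in> ball 0 1"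
  shows "((\<lambda>z. L (z, w0)) \<longlongrightarrow> c + Ln ((\<sigma> - \<phi> w0) / (\<sigma> - w0))) (at \<sigma> within stolz \<sigma> 2)"
proof -
  define h where "h = (\<lambda>w. (\<sigma> - \<phi> w) / (\<sigma> - w))"
  define S where "S = closed_segment \<tau> w0"
  define \<rho> where "\<rho> = max (cmod \<tau>) (cmod w0)"
  have \<rho>1: "\<rho> < 1" unfolding \<rho>_def using \<tau> w0 by simp
  have Sc: "S \<subseteq> cball 0 \<rho>" unfolding S_def
    by (rule closed_segment_subset) (auto simp: \<rho>_def)
  have SD: "S \<subseteq> ball 0 1" using Sc \<rho>1 by auto
  have cS: "compact S" unfolding S_def by simp
  have tS: "\<tau> \<in> S" and w0S: "w0 \<in> S" unfolding S_def by auto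
  have cphi: "continuous_on S \<phi>"
    using holomorphic_on_imp_continuous_on[OF hol] SD continuous_on_subset by blast
  obtain w1 where w1: "w1 \<in> S" "\<And>w. w \<in> S \<Longrightarrow> cmod (\<phi> w) \<le> cmod (\<phi> w1)"
  proof -
    have "continuous_on S (\<lambda>w. cmod (\<phi> w))" by (intro continuous_intros cphi)
    from compact_attains_sup[OF compact_continuous_image[OF this cS]] tS
    show ?thesis using that by fastforce
  qed
  define \<rho>' where "\<rho>' = cmod (\<phi> w1)"
  have \<rho>'1: "\<rho>' < 1" unfolding \<rho>'_def using \<phi>D w1(1) SD by auto
  define A where "A = 1 - \<rho>"
  define B where "B = 1 - \<rho>'"
  have A0: "A > 0" and B0: "B > 0" unfolding A_def B_def using \<rho>1 \<rho>'1 by auto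
  have wA: "cmod (\<sigma> - w) \<ge> A" if "w \<in> S" for w
  proof -
    have "cmod w \<le> \<rho>" using Sc that by auto
    then show ?thesis unfolding A_def using norm_triangle_ineq2[of \<sigma> w] \<sigma> by simp
  qed
  have wB: "cmod (\<sigma> - \<phi> w) \<ge> B" if "w \<in> S" for w
  proof -
    have "cmod (\<phi> w) \<le> \<rho>'" using w1(2)[OF that] unfolding \<rho>'_def .
    then show ?thesis unfolding B_def using norm_triangle_ineq2[of \<sigma> "\<phi> w"] \<sigma> by simp
  qed
  have w2: "cmod (\<sigma> - w) \<le> 2" if "w \<in> S" for w
  proof -
    have "cmod w < 1" using that SD by auto
    then show ?thesis using norm_triangle_ineq4[of \<sigma> w] \<sigma> by simp
  qed
  have p2: "cmod (\<sigma> - \<phi> w) \<le> 2" if "w \<in> S" for w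
  proof -
    have "cmod (\<phi> w) < 1" using that SD \<phi>D by auto
    then show ?thesis using norm_triangle_ineq4[of \<sigma> "\<phi> w"] \<sigma> by simp
  qed
  define \<eta> where "\<eta> = min (A / 2) (A * B / 16)"
  have \<eta>0: "\<eta> > 0" unfolding \<eta>_def using A0 B0 by simp
  have \<eta>A: "2 * \<eta> \<le> A" and \<eta>AB: "16 * \<eta> \<le> A * B" unfolding \<eta>_def by auto
  have hS: "h w \<notin> \<real>\<^sub>\<le>\<^sub>0" "h w \<noteq> 0" if "w \<in> ball 0 1" for w
  proof -
    show "h w \<notin> \<real>\<^sub>\<le>\<^sub>0" unfolding h_def using h_not_nonpos[OF \<sigma>] \<phi>D that by auto
    then show "h w \<noteq> 0" by auto
  qed
  have h\<tau>: "h \<tau> = 1" unfolding h_def using fix\<tau> \<sigma> \<tau> by auto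
  have swS: "\<sigma> - w \<noteq> 0" if "w \<in> S" for w
  proof -
    have "cmod (\<sigma> - w) > 0" using wA[OF that] A0 by linarith
    then show ?thesis by auto
  qed
  have ch: "continuous_on S h" unfolding h_def
    by (intro continuous_intros cphi) (use swS in auto)
  have lphi: "(\<phi> \<longlongrightarrow> \<sigma>) (at \<sigma> within stolz \<sigma> 2)" using lim unfolding has_angular_limit_def by simp
  have ev1: "\<forall>\<^sub>F z in at \<sigma> within stolz \<sigma> 2. dist z \<sigma> < \<eta>"
    using tendstoD[OF tendsto_ident_at \<eta>0] .
  have ev2: "\<forall>\<^sub>F z in at \<sigma> within stolz \<sigma> 2. dist (\<phi> z) \<sigma> < \<eta>"
    using tendstoD[OF lphi \<eta>0] .
  have key: "\<forall>\<^sub>F z in at \<sigma> within stolz \<sigma> 2.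
      L (z, w0) = L (z, \<tau>) - Ln (dq \<phi> z \<tau>) + Ln (h w0) + Ln (dq \<phi> z w0 / h w0)"
    using ev1 ev2 ev_within_self
  proof eventually_elim
    case (elim z)
    have zD: "z \<in> ball 0 1" using elim(3) stolz_ball by blast
    have zs: "cmod (z - \<sigma>) < \<eta>" and ps: "cmod (\<phi> z - \<sigma>) < \<eta>" using elim(1,2) by (auto simp: dist_norm)
    have close: "cmod (dq \<phi> z w / h w - 1) \<le> 1/2" and zw: "z \<noteq> w" if w: "w \<in> S" for w
    proof -
      have "cmod (z - w) \<ge> cmod (\<sigma> - w) - cmod (z - \<sigma>)"
        using norm_triangle_ineq2[of "\<sigma> - w" "\<sigma> - z"] by (simp add: norm_minus_commute)
      then have zwA: "cmod (z - w) \<ge> A / 2" using wA[OF w] zs \<eta>A by (simp add: field_simps)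
      then show "z \<noteq> w" using A0 by auto
      have sw: "\<sigma> - w \<noteq> 0" using wA[OF w] A0 by auto
      have spw: "\<sigma> - \<phi> w \<noteq> 0" using wB[OF w] B0 by auto
      have zw0: "z - w \<noteq> 0" using \<open>z \<noteq> w\<close> by simp
      have eq: "dq \<phi> z w / h w - 1 = ((\<phi> z - \<sigma>) * (\<sigma> - w) - (\<sigma> - \<phi> w) * (z - \<sigma>)) / ((z - w) * (\<sigma> - \<phi> w))"
      proof -
        define P where "P = (\<phi> z - \<phi> w) * (\<sigma> - w)"
        define Q where "Q = (z - w) * (\<sigma> - \<phi> w)"
        have Q0: "Q \<noteq> 0" unfolding Q_def using zw0 spw by simp
        have e1: "dq \<phi> z w / h w = P / Q" unfolding dq_def h_def P_def Q_def using \<open>z \<noteq> w\<close>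
          by (simp add: divide_divide_times_eq)
        have e2: "P / Q - 1 = (P - Q) / Q" using Q0 by (simp add: diff_divide_distrib)
        have e3: "P - Q = (\<phi> z - \<sigma>) * (\<sigma> - w) - (\<sigma> - \<phi> w) * (z - \<sigma>)"
          unfolding P_def Q_def by (simp add: algebra_simps)
        have "dq \<phi> z w / h w - 1 = (P - Q) / Q" using e1 e2 by simp
        also have "\<dots> = ((\<phi> z - \<sigma>) * (\<sigma> - w) - (\<sigma> - \<phi> w) * (z - \<sigma>)) / Q" using e3 by simp
        finally show ?thesis unfolding Q_def .
      qed
      have num: "cmod ((\<phi> z - \<sigma>) * (\<sigma> - w) - (\<sigma> - \<phi> w) * (z - \<sigma>)) \<le> 4 * \<eta>"
      proof -
        have "cmod ((\<phi> z - \<sigma>) * (\<sigma> - w) - (\<sigma> - \<phi> w) * (z - \<sigma>))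
              \<le> cmod (\<phi> z - \<sigma>) * cmod (\<sigma> - w) + cmod (\<sigma> - \<phi> w) * cmod (z - \<sigma>)"
          using norm_triangle_ineq4 by (metis norm_mult)
        also have "\<dots> \<le> \<eta> * 2 + 2 * \<eta>"
          using ps zs w2[OF w] p2[OF w] \<eta>0 by (intro add_mono mult_mono) auto
        finally show ?thesis by simp
      qed
      have den: "cmod ((z - w) * (\<sigma> - \<phi> w)) \<ge> (A / 2) * B"
        unfolding norm_mult using zwA wB[OF w] A0 B0 by (intro mult_mono) auto
      have "cmod (dq \<phi> z w / h w - 1) = cmod ((\<phi> z - \<sigma>) * (\<sigma> - w) - (\<sigma> - \<phi> w) * (z - \<sigma>)) / cmod ((z - w) * (\<sigma> - \<phi> w))"
        unfolding eq by (simp add: norm_divide)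
      also have "\<dots> \<le> (4 * \<eta>) / ((A / 2) * B)"
        using num den A0 B0 \<eta>0 by (intro frac_le) auto
      also have "\<dots> \<le> 1/2" using \<eta>AB A0 B0 by (simp add: field_simps)
      finally show "cmod (dq \<phi> z w / h w - 1) \<le> 1/2" .
    qed
    define k where "k = (\<lambda>w. L (z, w) - Ln (h w) - Ln (dq \<phi> z w / h w))"
    have img: "(\<lambda>w. (z, w)) ` S \<subseteq> ball 0 1 \<times> ball 0 1" using zD SD by auto
    have cLz: "continuous_on S (\<lambda>w. L (z, w))"
      by (rule continuous_on_compose2[OF cL _ img]) (auto intro!: continuous_intros)
    have cdq: "continuous_on S (\<lambda>w. dq \<phi> z w)"
    proof -
      have cp: "continuous_on S (\<lambda>w. (z, w))" by (intro continuous_intros)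
      show ?thesis using continuous_on_compose2[OF dq_cont[OF hol] cp img] by simp
    qed
    have f1: "h w \<notin> \<real>\<^sub>\<le>\<^sub>0" "h w \<noteq> 0" if "w \<in> S" for w
      using hS that SD by auto
    have f3: "dq \<phi> z w / h w \<notin> \<real>\<^sub>\<le>\<^sub>0" if "w \<in> S" for w
      using close[OF that] by (intro not_nonpos_of_close) simp
    have ck: "continuous_on S k" unfolding k_def
      by (intro continuous_intros cLz ch cdq) (auto dest: f1 f3)
    have ek: "exp (k w) = 1" if w: "w \<in> S" for w
    proof -
      have wD: "w \<in> ball 0 1" using w SD by auto
      have "exp (L (z, w)) = dq \<phi> z w" using eL[of "(z, w)"] zD wD by simp
      moreover have "dq \<phi> z w \<noteq> 0" by (rule dq_nz[OF hol inj zD wD])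
      moreover have "h w \<noteq> 0" using hS wD by auto
      ultimately show ?thesis unfolding k_def by (simp add: exp_diff)
    qed
    obtain n :: int where n: "\<And>w. w \<in> S \<Longrightarrow> k w = 2 * pi * \<i> * of_int n"
      using exp_one_const[OF convex_connected[OF convex_closed_segment[of \<tau> w0, folded S_def]] ck ek] by auto
    have "k w0 = k \<tau>" using n[OF w0S] n[OF tS] by simp
    then show ?case unfolding k_def h\<tau> by (simp add: algebra_simps)
  qed
  have l1: "((\<lambda>z. dq \<phi> z \<tau>) \<longlongrightarrow> 1) (at \<sigma> within stolz \<sigma> 2)"
    using dq_lim[OF lim \<sigma> \<tau>, of 2] h\<tau> unfolding h_def by simp
  have l2: "((\<lambda>z. dq \<phi> z w0 / h w0) \<longlongrightarrow> h w0 / h w0) (at \<sigma> within stolz \<sigma> 2)"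
  proof -
    have hw0nz: "h w0 \<noteq> 0" using hS(2)[OF w0] .
    have "((\<lambda>z. dq \<phi> z w0) \<longlongrightarrow> h w0) (at \<sigma> within stolz \<sigma> 2)"
      using dq_lim[OF lim \<sigma> w0, of 2] unfolding h_def by simp
    from tendsto_divide[OF this tendsto_const hw0nz] show ?thesis .
  qed
  have hw0: "h w0 / h w0 = 1" using hS[OF w0] by simp
  have "((\<lambda>z. L (z, \<tau>) - Ln (dq \<phi> z \<tau>) + Ln (h w0) + Ln (dq \<phi> z w0 / h w0))
        \<longlongrightarrow> c - Ln 1 + Ln (h w0) + Ln 1) (at \<sigma> within stolz \<sigma> 2)"
    by (intro tendsto_intros c l1 l2[unfolded hw0]) auto
  then have "((\<lambda>z. L (z, \<tau>) - Ln (dq \<phi> z \<tau>) + Ln (h w0) + Ln (dq \<phi> z w0 / h w0))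
        \<longlongrightarrow> c + Ln (h w0)) (at \<sigma> within stolz \<sigma> 2)" by simp
  from Lim_transform_eventually[OF this key[unfolded eq_commute[of "L _"]]]
  show ?thesis unfolding h_def .
qed


lemma dist_pair_le: "dist (a, b) (c, d) \<le> dist a c + dist b (d :: 'a::real_normed_vector)"
  for a c :: "'b::real_normed_vector"
proof -
  have "dist (a, b) (c, d) = norm (a - c, b - d)" by (simp add: dist_norm)
  also have "\<dots> \<le> norm (a - c) + norm (b - d)" by (rule norm_Pair_le)
  finally show ?thesis by (simp add: dist_norm)
qed

lemma radial_dist:
  assumes "cmod \<sigma> = 1" "0 \<le> r" "r \<le> 1"
  shows "dist (of_real r * \<sigma>) \<sigma> = 1 - r"
proof -
  have "of_real r * \<sigma> - \<sigma> = - (of_real (1 - r) * \<sigma>)" by (simp add: algebra_simps)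
  then show ?thesis using assms by (simp add: dist_norm norm_mult)
qed

lemma A_cross:
  assumes hol: "\<phi> holomorphic_on ball 0 1" and inj: "inj_on \<phi> (ball 0 1)"
    and \<phi>D: "\<And>z. cmod z < 1 \<Longrightarrow> cmod (\<phi> z) < 1"
    and cL: "continuous_on (ball 0 1 \<times> ball 0 1) L"
    and eL: "\<And>p. p \<in> ball 0 1 \<times> ball 0 1 \<Longrightarrow> exp (L p) = dq \<phi> (fst p) (snd p)"
    and \<tau>: "\<tau> \<in> ball 0 1" and fix\<tau>: "\<phi> \<tau> = \<tau>"
    and \<sigma>: "cmod \<sigma> = 1" and \<sigma>': "cmod \<sigma>' = 1" and ne: "\<sigma> \<noteq> \<sigma>'"
    and lim: "has_angular_limit \<phi> \<sigma> \<sigma>" and lim': "has_angular_limit \<phi> \<sigma>' \<sigma>'"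
    and c: "((\<lambda>z. L (z, \<tau>)) \<longlongrightarrow> c) (at \<sigma> within stolz \<sigma> 2)"
    and c': "((\<lambda>z. L (z, \<tau>)) \<longlongrightarrow> c') (at \<sigma>' within stolz \<sigma>' 2)"
  shows "c = c'"
proof -
  define W where "W = stolz \<sigma> 2 \<times> stolz \<sigma>' 2"
  define a where "a = (\<sigma>, \<sigma>')"
  have WD: "W \<subseteq> ball 0 1 \<times> ball 0 1" unfolding W_def using stolz_ball by blast
  have cW: "convex W" unfolding W_def by (intro convex_Times stolz_convex) auto
  have aW: "a \<notin> W" unfolding W_def a_def using stolz_not_mem[OF \<sigma>] by auto
  have cLW: "continuous_on W L" using continuous_on_subset[OF cL WD] .
  have lphi: "(\<phi> \<longlongrightarrow> \<sigma>) (at \<sigma> within stolz \<sigma> 2)" using lim unfolding has_angular_limit_def by simp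
  have lphi': "(\<phi> \<longlongrightarrow> \<sigma>') (at \<sigma>' within stolz \<sigma>' 2)" using lim' unfolding has_angular_limit_def by simp
  have lfst: "((\<lambda>p. fst p) \<longlongrightarrow> \<sigma>) (at a within W)"
    using tendsto_fst[OF tendsto_ident_at[of a W]] unfolding a_def by simp
  have lsnd: "((\<lambda>p. snd p) \<longlongrightarrow> \<sigma>') (at a within W)"
    using tendsto_snd[OF tendsto_ident_at[of a W]] unfolding a_def by simp
  have ffst: "filterlim (\<lambda>p. fst p) (at \<sigma> within stolz \<sigma> 2) (at a within W)"
  proof (rule filterlim_at_withinI[OF lfst])
    show "\<forall>\<^sub>F p in at a within W. fst p \<in> stolz \<sigma> 2 - {\<sigma>}"
      using ev_within_self[of W a] by eventually_elim (use stolz_not_mem[OF \<sigma>] in \<open>auto simp: W_def\<close>)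
  qed
  have fsnd: "filterlim (\<lambda>p. snd p) (at \<sigma>' within stolz \<sigma>' 2) (at a within W)"
  proof (rule filterlim_at_withinI[OF lsnd])
    show "\<forall>\<^sub>F p in at a within W. snd p \<in> stolz \<sigma>' 2 - {\<sigma>'}"
      using ev_within_self[of W a] by eventually_elim (use stolz_not_mem[OF \<sigma>'] in \<open>auto simp: W_def\<close>)
  qed
  have l1: "((\<lambda>p. \<phi> (fst p)) \<longlongrightarrow> \<sigma>) (at a within W)" using filterlim_compose[OF lphi ffst] .
  have l2: "((\<lambda>p. \<phi> (snd p)) \<longlongrightarrow> \<sigma>') (at a within W)" using filterlim_compose[OF lphi' fsnd] .
  have ss: "\<sigma> - \<sigma>' \<noteq> 0" using ne by simp
  have lQ: "((\<lambda>p. (\<phi> (fst p) - \<phi> (snd p)) / (fst p - snd p)) \<longlongrightarrow> (\<sigma> - \<sigma>') / (\<sigma> - \<sigma>')) (at a within W)"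
    by (intro tendsto_intros l1 l2 lfst lsnd ss)
  have evne: "\<forall>\<^sub>F p in at a within W. fst p - snd p \<noteq> 0"
    by (rule tendsto_imp_eventually_ne[OF _ ss]) (intro tendsto_intros lfst lsnd)
  have evQ: "\<forall>\<^sub>F p in at a within W. (\<phi> (fst p) - \<phi> (snd p)) / (fst p - snd p) = exp (L p)"
    using evne ev_within_self[of W a]
  proof eventually_elim
    case (elim p)
    then have "p \<in> ball 0 1 \<times> ball 0 1" "fst p \<noteq> snd p" using WD by auto
    then show ?case using eL[of p] by (simp add: dq_def)
  qed
  have lexp: "((\<lambda>p. exp (L p)) \<longlongrightarrow> 1) (at a within W)"
    using Lim_transform_eventually[OF lQ evQ] ss by simp
  obtain \<delta> and n :: int where \<delta>: "\<delta> > 0" and h\<delta>: "\<And>p. p \<in> W \<Longrightarrow> dist p a < \<delta> \<Longrightarrow>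
      L p = 2 * pi * \<i> * of_int n + Ln (exp (L p))"
    using log_local[OF cW aW cLW lexp] by blast
  define r where "r = max (1/2) (1 - \<delta> / 4)"
  have r0: "0 \<le> r" unfolding r_def by simp
  have r1: "r < 1" unfolding r_def using \<delta> by simp
  have "1 - \<delta> / 4 \<le> r" unfolding r_def by simp
  then have r\<delta>: "1 - r \<le> \<delta> / 4" by linarith
  define w0 where "w0 = of_real r * \<sigma>'"
  define z0 where "z0 = of_real r * \<sigma>"
  have w0s: "w0 \<in> stolz \<sigma>' 2" unfolding w0_def by (rule radial_in_stolz[OF \<sigma>' r0 r1]) simp
  have z0s: "z0 \<in> stolz \<sigma> 2" unfolding z0_def by (rule radial_in_stolz[OF \<sigma> r0 r1]) simp
  have w0D: "w0 \<in> ball 0 1" and z0D: "z0 \<in> ball 0 1" using w0s z0s stolz_ball by blast+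
  have dw0: "dist w0 \<sigma>' \<le> \<delta> / 4" unfolding w0_def using radial_dist[OF \<sigma>' r0] r1 r\<delta> by simp
  have dz0: "dist z0 \<sigma> \<le> \<delta> / 4" unfolding z0_def using radial_dist[OF \<sigma> r0] r1 r\<delta> by simp
  have Lform: "L p = 2 * pi * \<i> * of_int n + Ln (dq \<phi> (fst p) (snd p))"
    if "p \<in> W" "dist p a < \<delta>" for p
    using h\<delta>[OF that] eL[of p] that(1) WD by auto
  have claim1: "((\<lambda>z. L (z, w0)) \<longlongrightarrow> 2 * pi * \<i> * of_int n + Ln ((\<sigma> - \<phi> w0) / (\<sigma> - w0)))
      (at \<sigma> within stolz \<sigma> 2)"
  proof -
    have "((\<lambda>z. 2 * pi * \<i> * of_int n + Ln (dq \<phi> z w0)) \<longlongrightarrow> 2 * pi * \<i> * of_int n + Ln ((\<sigma> - \<phi> w0) / (\<sigma> - w0)))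
      (at \<sigma> within stolz \<sigma> 2)"
      by (intro tendsto_intros dq_lim[OF lim \<sigma> w0D]) (use h_not_nonpos[OF \<sigma>] \<phi>D w0D in auto)
    moreover have "\<forall>\<^sub>F z in at \<sigma> within stolz \<sigma> 2. 2 * pi * \<i> * of_int n + Ln (dq \<phi> z w0) = L (z, w0)"
      using ev_within_self[of "stolz \<sigma> 2" \<sigma>] tendstoD[OF tendsto_ident_at[of \<sigma> "stolz \<sigma> 2"] half_gt_zero[OF \<delta>]]
    proof eventually_elim
      case (elim z)
      have "dist (z, w0) a \<le> dist z \<sigma> + dist w0 \<sigma>'" unfolding a_def by (rule dist_pair_le)
      also have "\<dots> < \<delta>" using elim(2) dw0 \<delta> by simp
      finally show ?case using Lform[of "(z, w0)"] elim(1) w0s unfolding W_def by simp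
    qed
    ultimately show ?thesis by (rule Lim_transform_eventually)
  qed
  have pc: "((\<lambda>z. L (z, w0)) \<longlongrightarrow> c + Ln ((\<sigma> - \<phi> w0) / (\<sigma> - w0))) (at \<sigma> within stolz \<sigma> 2)"
    by (rule A_path[OF hol inj \<phi>D cL eL \<tau> fix\<tau> \<sigma> lim c w0D])
  have "c + Ln ((\<sigma> - \<phi> w0) / (\<sigma> - w0)) = 2 * pi * \<i> * of_int n + Ln ((\<sigma> - \<phi> w0) / (\<sigma> - w0))"
    using tendsto_unique[OF stolz_nontrivial[OF \<sigma>] pc claim1] by simp
  then have cn: "c = 2 * pi * \<i> * of_int n" by simp
  have claim2: "((\<lambda>w. L (w, z0)) \<longlongrightarrow> 2 * pi * \<i> * of_int n + Ln ((\<sigma>' - \<phi> z0) / (\<sigma>' - z0)))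
      (at \<sigma>' within stolz \<sigma>' 2)"
  proof -
    have "((\<lambda>w. 2 * pi * \<i> * of_int n + Ln (dq \<phi> w z0)) \<longlongrightarrow> 2 * pi * \<i> * of_int n + Ln ((\<sigma>' - \<phi> z0) / (\<sigma>' - z0)))
      (at \<sigma>' within stolz \<sigma>' 2)"
      by (intro tendsto_intros dq_lim[OF lim' \<sigma>' z0D]) (use h_not_nonpos[OF \<sigma>'] \<phi>D z0D in auto)
    moreover have "\<forall>\<^sub>F w in at \<sigma>' within stolz \<sigma>' 2. 2 * pi * \<i> * of_int n + Ln (dq \<phi> w z0) = L (w, z0)"
      using ev_within_self[of "stolz \<sigma>' 2" \<sigma>'] tendstoD[OF tendsto_ident_at[of \<sigma>' "stolz \<sigma>' 2"] half_gt_zero[OF \<delta>]]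
    proof eventually_elim
      case (elim w)
      have wD: "w \<in> ball 0 1" using elim(1) stolz_ball by blast
      have "dist (z0, w) a \<le> dist z0 \<sigma> + dist w \<sigma>'" unfolding a_def by (rule dist_pair_le)
      also have "\<dots> < \<delta>" using elim(2) dz0 \<delta> by simp
      finally have "L (z0, w) = 2 * pi * \<i> * of_int n + Ln (dq \<phi> z0 w)"
        using Lform[of "(z0, w)"] elim(1) z0s unfolding W_def by simp
      moreover have "L (w, z0) = L (z0, w)" by (rule A_sym[OF hol inj cL eL z0D wD])
      moreover have "dq \<phi> z0 w = dq \<phi> w z0" by (rule dq_sym)
      ultimately show ?case by simp
    qed
    ultimately show ?thesis by (rule Lim_transform_eventually)
  qed
  have pc': "((\<lambda>w. L (w, z0)) \<longlongrightarrow> c' + Ln ((\<sigma>' - \<phi> z0) / (\<sigma>' - z0))) (at \<sigma>' within stolz \<sigma>' 2)"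
    by (rule A_path[OF hol inj \<phi>D cL eL \<tau> fix\<tau> \<sigma>' lim' c' z0D])
  have "c' + Ln ((\<sigma>' - \<phi> z0) / (\<sigma>' - z0)) = 2 * pi * \<i> * of_int n + Ln ((\<sigma>' - \<phi> z0) / (\<sigma>' - z0))"
    using tendsto_unique[OF stolz_nontrivial[OF \<sigma>'] pc' claim2] by simp
  then have "c' = 2 * pi * \<i> * of_int n" by simp
  with cn show ?thesis by simp
qed


lemma partA:
  assumes \<tau>: "\<tau> \<in> ball 0 1" and Fs: "F \<subseteq> sphere 0 1" and \<phi>U: "\<phi> \<in> U_int_F \<tau> F"
  shows "\<exists>\<Psi>. is_log_branch \<tau> \<phi> \<Psi> \<and> (\<forall>\<sigma>\<in>F. has_angular_limit \<Psi> \<sigma> 0)"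
proof -
  have hol: "\<phi> holomorphic_on ball 0 1" and inj: "inj_on \<phi> (ball 0 1)"
    and img: "\<phi> ` ball 0 1 \<subseteq> ball 0 1" and fix\<tau>: "\<phi> \<tau> = \<tau>"
    and brf: "\<And>\<sigma>. \<sigma> \<in> F \<Longrightarrow> boundary_regular_fixpoint \<phi> \<sigma>"
    using \<phi>U \<tau> unfolding U_int_F_def U_int_def univalent_selfmap_def by auto
  have \<phi>D: "cmod (\<phi> z) < 1" if "cmod z < 1" for z using img that by (force simp: image_subset_iff)
  have lim: "has_angular_limit \<phi> \<sigma> \<sigma>" if "\<sigma> \<in> F" for \<sigma>
    using brf[OF that] unfolding boundary_regular_fixpoint_def by auto
  have sig: "cmod \<sigma> = 1" if "\<sigma> \<in> F" for \<sigma> using Fs that by auto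
  define D2 where "D2 = ball (0::complex) 1 \<times> ball (0::complex) 1"
  have cvD2: "convex D2" unfolding D2_def by (intro convex_Times) auto
  have opD2: "open D2" unfolding D2_def by (simp add: open_Times)
  obtain L where cL: "continuous_on D2 L" and eL0: "\<And>p. p \<in> D2 \<Longrightarrow> dq \<phi> (fst p) (snd p) = exp (L p)"
  proof (rule continuous_logarithm_on_simply_connected[of D2 "\<lambda>p. dq \<phi> (fst p) (snd p)"])
    show "continuous_on D2 (\<lambda>p. dq \<phi> (fst p) (snd p))" unfolding D2_def by (rule dq_cont[OF hol])
    show "simply_connected D2" by (rule convex_imp_simply_connected[OF cvD2])
    show "locally path_connected D2" by (rule open_imp_locally_path_connected[OF opD2])
    fix p assume "p \<in> D2" then show "dq \<phi> (fst p) (snd p) \<noteq> 0"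
      unfolding D2_def by (intro dq_nz[OF hol inj]) auto
  qed auto
  have cL': "continuous_on (ball 0 1 \<times> ball 0 1) L" using cL unfolding D2_def .
  have eL: "exp (L p) = dq \<phi> (fst p) (snd p)" if "p \<in> ball 0 1 \<times> ball 0 1" for p
    using eL0[of p] that unfolding D2_def by simp
  have cex: "\<exists>c. exp c = 1 \<and> has_angular_limit (\<lambda>z. L (z, \<tau>)) \<sigma> c" if "\<sigma> \<in> F" for \<sigma>
    by (rule A_lim[OF hol cL' eL \<tau> fix\<tau> sig[OF that] lim[OF that]])
  define cf where "cf = (\<lambda>\<sigma>. SOME c. exp c = 1 \<and> has_angular_limit (\<lambda>z. L (z, \<tau>)) \<sigma> c)"
  have cf: "exp (cf \<sigma>) = 1" "has_angular_limit (\<lambda>z. L (z, \<tau>)) \<sigma> (cf \<sigma>)" if "\<sigma> \<in> F" for \<sigma>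
    using someI_ex[OF cex[OF that]] unfolding cf_def by auto
  have cf2: "((\<lambda>z. L (z, \<tau>)) \<longlongrightarrow> cf \<sigma>) (at \<sigma> within stolz \<sigma> 2)" if "\<sigma> \<in> F" for \<sigma>
    using cf(2)[OF that] unfolding has_angular_limit_def by simp
  obtain c0 where c0: "exp c0 = 1" and cfc: "\<And>\<sigma>. \<sigma> \<in> F \<Longrightarrow> cf \<sigma> = c0"
  proof (cases "F = {}")
    case True then show ?thesis using that[of 0] by simp
  next
    case False
    then obtain \<sigma>1 where \<sigma>1: "\<sigma>1 \<in> F" by auto
    have "cf \<sigma> = cf \<sigma>1" if "\<sigma> \<in> F" for \<sigma>
    proof (cases "\<sigma> = \<sigma>1")
      case False
      show ?thesis
        by (rule A_cross[OF hol inj \<phi>D cL' eL \<tau> fix\<tau> sig[OF that] sig[OF \<sigma>1] False lim[OF that] lim[OF \<sigma>1]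
              cf2[OF that] cf2[OF \<sigma>1]])
    qed simp
    then show ?thesis using that[of "cf \<sigma>1"] cf(1)[OF \<sigma>1] by simp
  qed
  have gh: "(\<lambda>z. dq \<phi> z \<tau>) holomorphic_on ball 0 1"
  proof -
    have "(\<lambda>z. if z = \<tau> then deriv \<phi> \<tau> else (\<phi> z - \<phi> \<tau>) / (z - \<tau>)) holomorphic_on ball 0 1"
      by (rule pole_lemma[OF hol]) (use \<tau> in simp)
    moreover have "(\<lambda>z. if z = \<tau> then deriv \<phi> \<tau> else (\<phi> z - \<phi> \<tau>) / (z - \<tau>)) = (\<lambda>z. dq \<phi> z \<tau>)"
      by (auto simp: dq_def fun_eq_iff)
    ultimately show ?thesis by simp
  qed
  have gnz: "dq \<phi> z \<tau> \<noteq> 0" if "z \<in> ball 0 1" for z by (rule dq_nz[OF hol inj that \<tau>])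
  have sc: "simply_connected (ball (0::complex) 1)" by (rule convex_imp_simply_connected[OF convex_ball])
  have "\<forall>f. f holomorphic_on ball (0::complex) 1 \<and> (\<forall>z\<in>ball 0 1. f z \<noteq> 0) \<longrightarrow>
          (\<exists>g. g holomorphic_on ball 0 1 \<and> (\<forall>z\<in>ball 0 1. f z = exp (g z)))"
    using simply_connected_eq_holomorphic_log[OF open_ball[of "0::complex" 1]] sc by blast
  then have "\<exists>g. g holomorphic_on ball 0 1 \<and> (\<forall>z\<in>ball 0 1. dq \<phi> z \<tau> = exp (g z))"
    using gh gnz by blast
  then obtain \<Psi>0 where h\<Psi>0: "\<Psi>0 holomorphic_on ball 0 1" and e\<Psi>0: "\<And>z. z \<in> ball 0 1 \<Longrightarrow> dq \<phi> z \<tau> = exp (\<Psi>0 z)"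
    by blast
  have cLt: "continuous_on (ball 0 1) (\<lambda>z. L (z, \<tau>))"
  proof -
    have "(\<lambda>z. (z, \<tau>)) ` ball 0 1 \<subseteq> ball 0 1 \<times> ball 0 1" using \<tau> by auto
    then show ?thesis by (intro continuous_on_compose2[OF cL']) (auto intro!: continuous_intros)
  qed
  have cd: "continuous_on (ball 0 1) (\<lambda>z. \<Psi>0 z - L (z, \<tau>))"
    by (intro continuous_intros cLt holomorphic_on_imp_continuous_on[OF h\<Psi>0])
  have ed: "exp (\<Psi>0 z - L (z, \<tau>)) = 1" if "z \<in> ball 0 1" for z
  proof -
    have "exp (L (z, \<tau>)) = dq \<phi> z \<tau>" using eL[of "(z, \<tau>)"] that \<tau> by simp
    then show ?thesis using e\<Psi>0[OF that] by (simp add: exp_diff)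
  qed
  obtain n :: int where n: "\<And>z. z \<in> ball 0 1 \<Longrightarrow> \<Psi>0 z - L (z, \<tau>) = 2 * pi * \<i> * of_int n"
    using exp_one_const[OF convex_connected[OF convex_ball] cd ed] by auto
  define \<Psi> where "\<Psi> = (\<lambda>z. \<Psi>0 z - 2 * pi * \<i> * of_int n - c0)"
  have \<Psi>L: "\<Psi> z = L (z, \<tau>) - c0" if "z \<in> ball 0 1" for z
    using n[OF that] unfolding \<Psi>_def by (simp add: algebra_simps)
  show ?thesis
  proof (intro exI conjI ballI)
    show "is_log_branch \<tau> \<phi> \<Psi>" unfolding is_log_branch_def
    proof (intro conjI ballI)
      show "\<Psi> holomorphic_on ball 0 1" unfolding \<Psi>_def by (intro holomorphic_intros h\<Psi>0)
      fix z assume z: "z \<in> ball 0 1 - {\<tau>}"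
      have "exp (\<Psi> z) = exp (L (z, \<tau>)) / exp c0" using \<Psi>L[of z] z by (simp add: exp_diff)
      also have "\<dots> = dq \<phi> z \<tau>" using eL[of "(z, \<tau>)"] z \<tau> c0 by simp
      also have "\<dots> = (\<phi> z - \<tau>) / (z - \<tau>)" using z fix\<tau> by (simp add: dq_def)
      finally show "exp (\<Psi> z) = (\<phi> z - \<tau>) / (z - \<tau>)" .
    qed
    fix \<sigma> assume \<sigma>: "\<sigma> \<in> F"
    show "has_angular_limit \<Psi> \<sigma> 0" unfolding has_angular_limit_def
    proof (intro allI impI)
      fix C :: real assume C: "C > 1"
      have l0: "((\<lambda>z. L (z, \<tau>)) \<longlongrightarrow> c0) (at \<sigma> within stolz \<sigma> C)"
        using cf(2)[OF \<sigma>] cfc[OF \<sigma>] C unfolding has_angular_limit_def by auto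
      have l: "((\<lambda>z. L (z, \<tau>) - c0) \<longlongrightarrow> 0) (at \<sigma> within stolz \<sigma> C)"
        using tendsto_diff[OF l0 tendsto_const[of c0]] by simp
      have ev: "\<forall>\<^sub>F z in at \<sigma> within stolz \<sigma> C. L (z, \<tau>) - c0 = \<Psi> z"
        using ev_within_self[of "stolz \<sigma> C" \<sigma>]
      proof (rule eventually_mono)
        fix z assume "z \<in> stolz \<sigma> C"
        then have "z \<in> ball 0 1" using stolz_ball by blast
        then show "L (z, \<tau>) - c0 = \<Psi> z" using \<Psi>L by simp
      qed
      show "(\<Psi> \<longlongrightarrow> 0) (at \<sigma> within stolz \<sigma> C)" by (rule Lim_transform_eventually[OF l ev])
    qed
  qed
qed


theorem lemma7p2:
  fixes \<tau> :: complex and F :: "complex set"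
  assumes "\<tau> \<in> ball 0 1" and "finite F" and "F \<subseteq> sphere 0 1"
  shows "(\<forall>\<phi>\<in>U_int_F \<tau> F. \<exists>\<Psi>. is_log_branch \<tau> \<phi> \<Psi> \<and> (\<forall>\<sigma>\<in>F. has_angular_limit \<Psi> \<sigma> 0))
    \<and> (\<forall>(I :: real set) (\<phi> :: real \<Rightarrow> complex \<Rightarrow> complex) (\<Psi> :: real \<Rightarrow> complex \<Rightarrow> complex) \<sigma>0.
          is_interval I
        \<and> (\<forall>t\<in>I. \<phi> t \<in> U_int_F \<tau> F)
        \<and> (\<forall>z\<in>ball 0 1. continuous_on I (\<lambda>t. \<phi> t z))
        \<and> \<sigma>0 \<in> F
        \<and> (\<forall>t\<in>I. \<exists>e>0. \<exists>M. \<forall>s\<in>I. \<bar>s - t\<bar> < e \<longrightarrow> cmod (angular_deriv (\<phi> s) \<sigma>0) \<le> M)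
        \<and> (\<forall>t\<in>I. is_log_branch \<tau> (\<phi> t) (\<Psi> t) \<and> (\<forall>\<sigma>\<in>F. has_angular_limit (\<Psi> t) \<sigma> 0))
        \<longrightarrow> (\<forall>t0\<in>I. \<forall>K. compact K \<and> K \<subseteq> ball 0 1 \<longrightarrow>
               uniform_limit K \<Psi> (\<Psi> t0) (at t0 within I)))"
proof (intro conjI allI impI ballI)
  fix \<phi> assume "\<phi> \<in> U_int_F \<tau> F"
  then show "\<exists>\<Psi>. is_log_branch \<tau> \<phi> \<Psi> \<and> (\<forall>\<sigma>\<in>F. has_angular_limit \<Psi> \<sigma> 0)"
    using partA[OF assms(1) assms(3)] by blast
next
  fix I :: "real set" and \<phi> :: "real \<Rightarrow> complex \<Rightarrow> complex" and \<Psi> :: "real \<Rightarrow> complex \<Rightarrow> complex"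
    and \<sigma>0 t0 and K :: "complex set"
  assume H: "is_interval I
        \<and> (\<forall>t\<in>I. \<phi> t \<in> U_int_F \<tau> F)
        \<and> (\<forall>z\<in>ball 0 1. continuous_on I (\<lambda>t. \<phi> t z))
        \<and> \<sigma>0 \<in> F
        \<and> (\<forall>t\<in>I. \<exists>e>0. \<exists>M. \<forall>s\<in>I. \<bar>s - t\<bar> < e \<longrightarrow> cmod (angular_deriv (\<phi> s) \<sigma>0) \<le> M)
        \<and> (\<forall>t\<in>I. is_log_branch \<tau> (\<phi> t) (\<Psi> t) \<and> (\<forall>\<sigma>\<in>F. has_angular_limit (\<Psi> t) \<sigma> 0))"
    and t0: "t0 \<in> I" and K: "compact K \<and> K \<subseteq> ball 0 1"
  show "uniform_limit K \<Psi> (\<Psi> t0) (at t0 within I)"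
    using partB[OF assms(1) assms(3), of I \<phi> \<sigma>0 \<Psi> t0 K] H t0 K by blast
qed

end
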